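(* Let $X$ be a matrix ordered operator space and let $J\subseteq X$ be a kernel. Then $X/J$, with the quotient operator space structure, involution $(x+J)^*=x^*+J$ and cones $M_n(X/J)^+=\overline{\{x+M_n(J):x\in M_n(X)^+\}}$, is a matrix ordered operator space.
   Context: A matrix ordered operator space is an operator space $X$ with a conjugate-linear completely isometric involution and, for each $n$, a norm-closed cone $M_n(X)^+\subseteq M_n(X)^{sa}$ such that the family is closed under $x\mapsto\alpha^*x\alpha$ for scalar matrices $\alpha$ and under direct sums (a matrix convex cone), and $M_n(X)^+\cap(-M_n(X)^+)=\{0\}$ for all $n$. A closed subspace $J\subseteq X$ is a kernel if $J=\ker\phi$ for some completely contractive completely positive map $\phi:X\to Y$ into a matrix ordered operator space $Y$. The quotient operator space structure identifies $M_n(X/J)$ isometrically with $M_n(X)/M_n(J)$, and the closure in the claim is in this quotient norm. *)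

theory Defs
  imports Complex_Main
begin

text \<open>An n x n matrix over V is a function nat => nat => 'v whose entries with indices < n lie in
  the carrier and which is zero outside the n x n block.\<close>

record 'v mos =
  vcar   :: "'v set"
  vadd   :: "'v \<Rightarrow> 'v \<Rightarrow> 'v"
  vzero  :: "'v"
  vscale :: "complex \<Rightarrow> 'v \<Rightarrow> 'v"
  vstar  :: "'v \<Rightarrow> 'v"
  mnorm  :: "nat \<Rightarrow> (nat \<Rightarrow> nat \<Rightarrow> 'v) \<Rightarrow> real"
  mpos   :: "nat \<Rightarrow> (nat \<Rightarrow> nat \<Rightarrow> 'v) set"

definition cvector_space :: "('v, 'z) mos_scheme \<Rightarrow> bool" where
  "cvector_space V \<longleftrightarrow>
     vzero V \<in> vcar V \<and>
     (\<forall>a\<in>vcar V. \<forall>b\<in>vcar V. vadd V a b \<in> vcar V) \<and>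
     (\<forall>c. \<forall>a\<in>vcar V. vscale V c a \<in> vcar V) \<and>
     (\<forall>a\<in>vcar V. \<forall>b\<in>vcar V. \<forall>c\<in>vcar V. vadd V (vadd V a b) c = vadd V a (vadd V b c)) \<and>
     (\<forall>a\<in>vcar V. \<forall>b\<in>vcar V. vadd V a b = vadd V b a) \<and>
     (\<forall>a\<in>vcar V. vadd V a (vzero V) = a) \<and>
     (\<forall>a\<in>vcar V. vadd V a (vscale V (-1) a) = vzero V) \<and>
     (\<forall>a\<in>vcar V. vscale V 1 a = a) \<and>
     (\<forall>c d. \<forall>a\<in>vcar V. vscale V c (vscale V d a) = vscale V (c * d) a) \<and>
     (\<forall>c d. \<forall>a\<in>vcar V. vscale V (c + d) a = vadd V (vscale V c a) (vscale V d a)) \<and>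
     (\<forall>c. \<forall>a\<in>vcar V. \<forall>b\<in>vcar V. vscale V c (vadd V a b) = vadd V (vscale V c a) (vscale V c b))"

primrec vsum :: "('v, 'z) mos_scheme \<Rightarrow> (nat \<Rightarrow> 'v) \<Rightarrow> nat \<Rightarrow> 'v" where
  "vsum V f 0 = vzero V"
| "vsum V f (Suc k) = vadd V (vsum V f k) (f k)"

definition mat_carrier :: "('v, 'z) mos_scheme \<Rightarrow> nat \<Rightarrow> (nat \<Rightarrow> nat \<Rightarrow> 'v) set" where
  "mat_carrier V n = {x. (\<forall>i<n. \<forall>j<n. x i j \<in> vcar V) \<and>
                          (\<forall>i j. (n \<le> i \<or> n \<le> j) \<longrightarrow> x i j = vzero V)}"

definition mat_zero :: "('v, 'z) mos_scheme \<Rightarrow> nat \<Rightarrow> nat \<Rightarrow> 'v" where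
  "mat_zero V = (\<lambda>i j. vzero V)"

definition mat_add :: "('v, 'z) mos_scheme \<Rightarrow> nat \<Rightarrow> (nat \<Rightarrow> nat \<Rightarrow> 'v) \<Rightarrow> (nat \<Rightarrow> nat \<Rightarrow> 'v) \<Rightarrow> nat \<Rightarrow> nat \<Rightarrow> 'v" where
  "mat_add V n x y = (\<lambda>i j. if i < n \<and> j < n then vadd V (x i j) (y i j) else vzero V)"

definition mat_scale :: "('v, 'z) mos_scheme \<Rightarrow> nat \<Rightarrow> complex \<Rightarrow> (nat \<Rightarrow> nat \<Rightarrow> 'v) \<Rightarrow> nat \<Rightarrow> nat \<Rightarrow> 'v" where
  "mat_scale V n c x = (\<lambda>i j. if i < n \<and> j < n then vscale V c (x i j) else vzero V)"

definition mat_sub :: "('v, 'z) mos_scheme \<Rightarrow> nat \<Rightarrow> (nat \<Rightarrow> nat \<Rightarrow> 'v) \<Rightarrow> (nat \<Rightarrow> nat \<Rightarrow> 'v) \<Rightarrow> nat \<Rightarrow> nat \<Rightarrow> 'v" where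
  "mat_sub V n x y = mat_add V n x (mat_scale V n (-1) y)"

definition mat_star :: "('v, 'z) mos_scheme \<Rightarrow> nat \<Rightarrow> (nat \<Rightarrow> nat \<Rightarrow> 'v) \<Rightarrow> nat \<Rightarrow> nat \<Rightarrow> 'v" where
  "mat_star V n x = (\<lambda>i j. if i < n \<and> j < n then vstar V (x j i) else vzero V)"

definition mat_lr :: "('v, 'z) mos_scheme \<Rightarrow> nat \<Rightarrow> nat \<Rightarrow> (nat \<Rightarrow> nat \<Rightarrow> complex)
      \<Rightarrow> (nat \<Rightarrow> nat \<Rightarrow> 'v) \<Rightarrow> (nat \<Rightarrow> nat \<Rightarrow> complex) \<Rightarrow> nat \<Rightarrow> nat \<Rightarrow> 'v" where
  "mat_lr V n m \<alpha> x \<beta> = (\<lambda>k l. if k < m \<and> l < m then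
       vsum V (\<lambda>i. vsum V (\<lambda>j. vscale V (\<alpha> k i * \<beta> j l) (x i j)) n) n else vzero V)"

definition mat_conj :: "('v, 'z) mos_scheme \<Rightarrow> nat \<Rightarrow> nat \<Rightarrow> (nat \<Rightarrow> nat \<Rightarrow> complex)
      \<Rightarrow> (nat \<Rightarrow> nat \<Rightarrow> 'v) \<Rightarrow> nat \<Rightarrow> nat \<Rightarrow> 'v" where
  "mat_conj V n m \<alpha> x = mat_lr V n m (\<lambda>k i. cnj (\<alpha> i k)) x \<alpha>"

definition mat_dsum :: "('v, 'z) mos_scheme \<Rightarrow> nat \<Rightarrow> nat \<Rightarrow> (nat \<Rightarrow> nat \<Rightarrow> 'v)
      \<Rightarrow> (nat \<Rightarrow> nat \<Rightarrow> 'v) \<Rightarrow> nat \<Rightarrow> nat \<Rightarrow> 'v" where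
  "mat_dsum V n m x y = (\<lambda>i j. if i < n \<and> j < n then x i j
       else if n \<le> i \<and> i < n + m \<and> n \<le> j \<and> j < n + m then y (i - n) (j - n) else vzero V)"

definition cmat_norm :: "nat \<Rightarrow> nat \<Rightarrow> (nat \<Rightarrow> nat \<Rightarrow> complex) \<Rightarrow> real" where
  "cmat_norm m n \<alpha> = Sup {sqrt (\<Sum>i<m. (cmod (\<Sum>j<n. \<alpha> i j * v j))\<^sup>2) | v.
                              (\<Sum>j<n. (cmod (v j))\<^sup>2) \<le> 1}"

definition operator_space :: "('v, 'z) mos_scheme \<Rightarrow> bool" where
  "operator_space V \<longleftrightarrow> cvector_space V \<and>
     (\<forall>n\<ge>1. \<forall>x\<in>mat_carrier V n. mnorm V n x \<ge> 0) \<and>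
     (\<forall>n\<ge>1. \<forall>x\<in>mat_carrier V n. mnorm V n x = 0 \<longrightarrow> x = mat_zero V) \<and>
     (\<forall>n\<ge>1. \<forall>c. \<forall>x\<in>mat_carrier V n. mnorm V n (mat_scale V n c x) = cmod c * mnorm V n x) \<and>
     (\<forall>n\<ge>1. \<forall>x\<in>mat_carrier V n. \<forall>y\<in>mat_carrier V n.
         mnorm V n (mat_add V n x y) \<le> mnorm V n x + mnorm V n y) \<and>
     (\<forall>n\<ge>1. \<forall>m\<ge>1. \<forall>x\<in>mat_carrier V n. \<forall>y\<in>mat_carrier V m.
         mnorm V (n + m) (mat_dsum V n m x y) = max (mnorm V n x) (mnorm V m y)) \<and>
     (\<forall>n\<ge>1. \<forall>m\<ge>1. \<forall>x\<in>mat_carrier V n. \<forall>\<alpha> \<beta>.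
         mnorm V m (mat_lr V n m \<alpha> x \<beta>) \<le> cmat_norm m n \<alpha> * mnorm V n x * cmat_norm n m \<beta>)"

definition involutive_os :: "('v, 'z) mos_scheme \<Rightarrow> bool" where
  "involutive_os V \<longleftrightarrow> operator_space V \<and>
     (\<forall>a\<in>vcar V. vstar V a \<in> vcar V) \<and>
     (\<forall>a\<in>vcar V. vstar V (vstar V a) = a) \<and>
     (\<forall>a\<in>vcar V. \<forall>b\<in>vcar V. vstar V (vadd V a b) = vadd V (vstar V a) (vstar V b)) \<and>
     (\<forall>c. \<forall>a\<in>vcar V. vstar V (vscale V c a) = vscale V (cnj c) (vstar V a)) \<and>
     (\<forall>n\<ge>1. \<forall>x\<in>mat_carrier V n. mnorm V n (mat_star V n x) = mnorm V n x)"

definition mat_closure :: "('v, 'z) mos_scheme \<Rightarrow> nat \<Rightarrow> (nat \<Rightarrow> nat \<Rightarrow> 'v) set \<Rightarrow> (nat \<Rightarrow> nat \<Rightarrow> 'v) set" where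
  "mat_closure V n S = {x \<in> mat_carrier V n. \<forall>\<epsilon>>0. \<exists>y\<in>S. mnorm V n (mat_sub V n x y) < \<epsilon>}"

definition matrix_ordered_os :: "('v, 'z) mos_scheme \<Rightarrow> bool" where
  "matrix_ordered_os V \<longleftrightarrow> involutive_os V \<and>
     \<comment> \<open>cones consist of self-adjoint matrices\<close>
     (\<forall>n\<ge>1. \<forall>x\<in>mpos V n. x \<in> mat_carrier V n \<and> mat_star V n x = x) \<and>
     \<comment> \<open>norm-closed\<close>
     (\<forall>n\<ge>1. mat_closure V n (mpos V n) \<subseteq> mpos V n) \<and>
     \<comment> \<open>cones\<close>
     (\<forall>n\<ge>1. \<forall>x\<in>mpos V n. \<forall>y\<in>mpos V n. mat_add V n x y \<in> mpos V n) \<and>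
     (\<forall>n\<ge>1. \<forall>t::real. t \<ge> 0 \<longrightarrow> (\<forall>x\<in>mpos V n. mat_scale V n (complex_of_real t) x \<in> mpos V n)) \<and>
     \<comment> \<open>matrix convexity: x \<mapsto> alpha^* x alpha for scalar n x m alpha, and direct sums\<close>
     (\<forall>n\<ge>1. \<forall>m\<ge>1. \<forall>x\<in>mpos V n. \<forall>\<alpha>. mat_conj V n m \<alpha> x \<in> mpos V m) \<and>
     (\<forall>n\<ge>1. \<forall>m\<ge>1. \<forall>x\<in>mpos V n. \<forall>y\<in>mpos V m. mat_dsum V n m x y \<in> mpos V (n + m)) \<and>
     \<comment> \<open>proper: M_n(V)^+ \<inter> -M_n(V)^+ = {0}\<close>
     (\<forall>n\<ge>1. \<forall>x\<in>mpos V n. mat_scale V n (-1) x \<in> mpos V n \<longrightarrow> x = mat_zero V)"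

definition mat_map :: "('w, 'y) mos_scheme \<Rightarrow> nat \<Rightarrow> ('v \<Rightarrow> 'w) \<Rightarrow> (nat \<Rightarrow> nat \<Rightarrow> 'v) \<Rightarrow> nat \<Rightarrow> nat \<Rightarrow> 'w" where
  "mat_map W n \<phi> x = (\<lambda>i j. if i < n \<and> j < n then \<phi> (x i j) else vzero W)"

definition ccp_map :: "('v, 'z) mos_scheme \<Rightarrow> ('w, 'y) mos_scheme \<Rightarrow> ('v \<Rightarrow> 'w) \<Rightarrow> bool" where
  "ccp_map V W \<phi> \<longleftrightarrow>
     (\<forall>a\<in>vcar V. \<phi> a \<in> vcar W) \<and>
     (\<forall>a\<in>vcar V. \<forall>b\<in>vcar V. \<phi> (vadd V a b) = vadd W (\<phi> a) (\<phi> b)) \<and>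
     (\<forall>c. \<forall>a\<in>vcar V. \<phi> (vscale V c a) = vscale W c (\<phi> a)) \<and>
     (\<forall>a\<in>vcar V. \<phi> (vstar V a) = vstar W (\<phi> a)) \<and>
     (\<forall>n\<ge>1. \<forall>x\<in>mat_carrier V n. mnorm W n (mat_map W n \<phi> x) \<le> mnorm V n x) \<and>
     (\<forall>n\<ge>1. \<forall>x\<in>mpos V n. mat_map W n \<phi> x \<in> mpos W n)"

definition kernel_of :: "('v, 'z) mos_scheme \<Rightarrow> ('w, 'y) mos_scheme \<Rightarrow> ('v \<Rightarrow> 'w) \<Rightarrow> 'v set" where
  "kernel_of V W \<phi> = {a \<in> vcar V. \<phi> a = vzero W}"

definition coset :: "('v, 'z) mos_scheme \<Rightarrow> 'v set \<Rightarrow> 'v \<Rightarrow> 'v set" where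
  "coset X J x = {vadd X x j | j. j \<in> J}"

text \<open>Quotient space with involution (x+J)^* = x^* + J and quotient matrix norms
  ||[x_ij + J]||_n = inf { ||y||_n : y in M_n(X), y_ij in x_ij + J }, i.e. the norm of
  M_n(X)/M_n(J).  No cones yet.\<close>
definition quot_base :: "('v, 'z) mos_scheme \<Rightarrow> 'v set \<Rightarrow> 'v set mos" where
  "quot_base X J = \<lparr>
     vcar = {coset X J x | x. x \<in> vcar X},
     vadd = (\<lambda>A B. {vadd X a b | a b. a \<in> A \<and> b \<in> B}),
     vzero = J,
     vscale = (\<lambda>c A. {vadd X (vscale X c a) j | a j. a \<in> A \<and> j \<in> J}),
     vstar = (\<lambda>A. {vadd X (vstar X a) j | a j. a \<in> A \<and> j \<in> J}),
     mnorm = (\<lambda>n Q. Inf {mnorm X n y | y. y \<in> mat_carrier X n \<and> (\<forall>i<n. \<forall>j<n. y i j \<in> Q i j)}),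
     mpos = (\<lambda>n. {}) \<rparr>"

definition quot :: "('v, 'z) mos_scheme \<Rightarrow> 'v set \<Rightarrow> 'v set mos" where
  "quot X J = (quot_base X J)\<lparr> mpos := (\<lambda>n.
       mat_closure (quot_base X J) n {(\<lambda>i j. coset X J (x i j)) | x. x \<in> mpos X n}) \<rparr>"

end

theory Submission
  imports Defs
begin

locale cvs =
  fixes V :: "('v, 'z) mos_scheme"
  assumes cvs: "cvector_space V"
begin

lemma zero_in[simp]: "vzero V \<in> vcar V" using cvs unfolding cvector_space_def by auto
lemma add_in[simp]: "a \<in> vcar V \<Longrightarrow> b \<in> vcar V \<Longrightarrow> vadd V a b \<in> vcar V"
  using cvs unfolding cvector_space_def by auto
lemma scale_in[simp]: "a \<in> vcar V \<Longrightarrow> vscale V c a \<in> vcar V"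
  using cvs unfolding cvector_space_def by auto
lemma add_assoc: "a \<in> vcar V \<Longrightarrow> b \<in> vcar V \<Longrightarrow> c \<in> vcar V \<Longrightarrow> vadd V (vadd V a b) c = vadd V a (vadd V b c)"
  using cvs unfolding cvector_space_def by auto
lemma add_comm: "a \<in> vcar V \<Longrightarrow> b \<in> vcar V \<Longrightarrow> vadd V a b = vadd V b a"
  using cvs unfolding cvector_space_def by auto
lemma add_zero[simp]: "a \<in> vcar V \<Longrightarrow> vadd V a (vzero V) = a"
  using cvs unfolding cvector_space_def by auto
lemma add_neg: "a \<in> vcar V \<Longrightarrow> vadd V a (vscale V (-1) a) = vzero V"
  using cvs unfolding cvector_space_def by auto
lemma scale_one[simp]: "a \<in> vcar V \<Longrightarrow> vscale V 1 a = a"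
  using cvs unfolding cvector_space_def by auto
lemma scale_scale[simp]: "a \<in> vcar V \<Longrightarrow> vscale V c (vscale V d a) = vscale V (c * d) a"
  using cvs unfolding cvector_space_def by auto
lemma scale_ladd: "a \<in> vcar V \<Longrightarrow> vscale V (c + d) a = vadd V (vscale V c a) (vscale V d a)"
  using cvs unfolding cvector_space_def by auto
lemma scale_radd: "a \<in> vcar V \<Longrightarrow> b \<in> vcar V \<Longrightarrow> vscale V c (vadd V a b) = vadd V (vscale V c a) (vscale V c b)"
  using cvs unfolding cvector_space_def by auto

lemma zero_add[simp]: "a \<in> vcar V \<Longrightarrow> vadd V (vzero V) a = a"
  using add_comm add_zero zero_in by metis
lemma add_lcomm: "a \<in> vcar V \<Longrightarrow> b \<in> vcar V \<Longrightarrow> c \<in> vcar V \<Longrightarrow> vadd V a (vadd V b c) = vadd V b (vadd V a c)"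
  by (metis add_assoc add_comm)
lemmas add_ac = add_assoc add_comm add_lcomm

lemma neg_add: "a \<in> vcar V \<Longrightarrow> vadd V (vscale V (-1) a) a = vzero V"
  using add_comm add_neg scale_in by metis
lemma add_neg_cancel: "a \<in> vcar V \<Longrightarrow> b \<in> vcar V \<Longrightarrow> vadd V a (vadd V (vscale V (-1) a) b) = b"
  by (metis add_assoc add_neg scale_in zero_add)
lemma neg_add_cancel: "a \<in> vcar V \<Longrightarrow> b \<in> vcar V \<Longrightarrow> vadd V (vscale V (-1) a) (vadd V a b) = b"
  by (metis add_assoc neg_add scale_in zero_add)
lemma cancel_left: "a \<in> vcar V \<Longrightarrow> b \<in> vcar V \<Longrightarrow> c \<in> vcar V \<Longrightarrow> vadd V a b = vadd V a c \<Longrightarrow> b = c"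
  by (metis neg_add_cancel)
lemma scale_zero_left[simp]: "a \<in> vcar V \<Longrightarrow> vscale V 0 a = vzero V"
proof -
  assume a: "a \<in> vcar V"
  have "vadd V (vscale V 0 a) (vscale V 0 a) = vadd V (vscale V 0 a) (vzero V)"
    using scale_ladd[OF a, of 0 0] a by simp
  thus ?thesis using cancel_left a by (metis scale_in zero_in)
qed
lemma scale_zero_right[simp]: "vscale V c (vzero V) = vzero V"
proof -
  have "vadd V (vscale V c (vzero V)) (vscale V c (vzero V)) = vadd V (vscale V c (vzero V)) (vzero V)"
    using scale_radd[of "vzero V" "vzero V" c] by simp
  thus ?thesis using cancel_left by (metis scale_in zero_in)
qed
lemma sub_zero_eq: "a \<in> vcar V \<Longrightarrow> b \<in> vcar V \<Longrightarrow> vadd V a (vscale V (-1) b) = vzero V \<Longrightarrow> a = b"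
  by (metis add_assoc neg_add scale_in add_zero zero_add)

lemma vsum_in[simp]: "(\<And>i. i < k \<Longrightarrow> f i \<in> vcar V) \<Longrightarrow> vsum V f k \<in> vcar V"
  by (induction k) auto
lemma vsum_cong: "(\<And>i. i < k \<Longrightarrow> f i = g i) \<Longrightarrow> vsum V f k = vsum V g k"
  by (induction k) auto
lemma vsum_add: "(\<And>i. i < k \<Longrightarrow> f i \<in> vcar V) \<Longrightarrow> (\<And>i. i < k \<Longrightarrow> g i \<in> vcar V) \<Longrightarrow>
   vsum V (\<lambda>i. vadd V (f i) (g i)) k = vadd V (vsum V f k) (vsum V g k)"
proof (induction k)
  case (Suc k)
  then show ?case by (simp add: add_ac)
qed simp
lemma vsum_scale: "(\<And>i. i < k \<Longrightarrow> f i \<in> vcar V) \<Longrightarrow>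
   vsum V (\<lambda>i. vscale V c (f i)) k = vscale V c (vsum V f k)"
  by (induction k) (auto simp: scale_radd)
lemma vsum_zero: "(\<And>i. i < k \<Longrightarrow> f i = vzero V) \<Longrightarrow> vsum V f k = vzero V"
  by (induction k) auto
lemma vsum_delta: "k0 < k \<Longrightarrow> f k0 \<in> vcar V \<Longrightarrow> (\<And>i. i < k \<Longrightarrow> i \<noteq> k0 \<Longrightarrow> f i = vzero V) \<Longrightarrow> vsum V f k = f k0"
proof (induction k)
  case (Suc k)
  show ?case
  proof (cases "k0 = k")
    case True
    then have "vsum V f k = vzero V" using Suc.prems by (intro vsum_zero) auto
    then show ?thesis using True Suc.prems by simp
  next
    case False
    then have "k0 < k" using Suc.prems by simp
    then show ?thesis using Suc False by simp
  qed
qed simp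

abbreviation car where "car n \<equiv> mat_carrier V n"

lemma mat_in[simp]: "x \<in> car n \<Longrightarrow> i < n \<Longrightarrow> j < n \<Longrightarrow> x i j \<in> vcar V"
  unfolding mat_carrier_def by auto
lemma mat_out: "x \<in> car n \<Longrightarrow> \<not> (i < n \<and> j < n) \<Longrightarrow> x i j = vzero V"
  unfolding mat_carrier_def by auto
lemma mat_out1[simp]: "x \<in> car n \<Longrightarrow> n \<le> i \<Longrightarrow> x i j = vzero V"
  unfolding mat_carrier_def by auto
lemma mat_out2[simp]: "x \<in> car n \<Longrightarrow> n \<le> j \<Longrightarrow> x i j = vzero V"
  unfolding mat_carrier_def by auto
lemma mat_carI: "(\<And>i j. i < n \<Longrightarrow> j < n \<Longrightarrow> x i j \<in> vcar V) \<Longrightarrow> (\<And>i j. \<not> (i < n \<and> j < n) \<Longrightarrow> x i j = vzero V) \<Longrightarrow> x \<in> car n"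
  unfolding mat_carrier_def by auto

lemma mat_add_in[simp]: "x \<in> car n \<Longrightarrow> y \<in> car n \<Longrightarrow> mat_add V n x y \<in> car n"
  by (rule mat_carI) (auto simp: mat_add_def)
lemma mat_scale_in[simp]: "x \<in> car n \<Longrightarrow> mat_scale V n c x \<in> car n"
  by (rule mat_carI) (auto simp: mat_scale_def)
lemma mat_sub_in[simp]: "x \<in> car n \<Longrightarrow> y \<in> car n \<Longrightarrow> mat_sub V n x y \<in> car n"
  by (simp add: mat_sub_def)
lemma mat_zero_in[simp]: "mat_zero V \<in> car n"
  by (rule mat_carI) (auto simp: mat_zero_def)
lemma mat_dsum_in[simp]: "x \<in> car n \<Longrightarrow> y \<in> car m \<Longrightarrow> mat_dsum V n m x y \<in> car (n + m)"
  by (rule mat_carI) (auto simp: mat_dsum_def)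
lemma mat_lr_in[simp]: "x \<in> car n \<Longrightarrow> mat_lr V n m \<alpha> x \<beta> \<in> car m"
  by (rule mat_carI) (auto simp: mat_lr_def)
lemma mat_conj_in[simp]: "x \<in> car n \<Longrightarrow> mat_conj V n m \<alpha> x \<in> car m"
  by (simp add: mat_conj_def)

lemma I1: "x \<in> car n \<Longrightarrow> x' \<in> car n \<Longrightarrow> p \<in> car n \<Longrightarrow>
  mat_sub V n x p = mat_add V n (mat_sub V n x x') (mat_sub V n x' p)"
  by (intro ext) (auto simp: mat_sub_def mat_add_def mat_scale_def add_assoc neg_add_cancel)
lemma I2: "x \<in> car n \<Longrightarrow> y \<in> car n \<Longrightarrow> p \<in> car n \<Longrightarrow> q \<in> car n \<Longrightarrow>
  mat_sub V n (mat_add V n x y) (mat_add V n p q) = mat_add V n (mat_sub V n x p) (mat_sub V n y q)"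
  by (intro ext) (auto simp: mat_sub_def mat_add_def mat_scale_def scale_radd add_ac)
lemma I3: "x \<in> car n \<Longrightarrow> p \<in> car n \<Longrightarrow>
  mat_sub V n (mat_scale V n c x) (mat_scale V n c p) = mat_scale V n c (mat_sub V n x p)"
  by (intro ext) (auto simp: mat_sub_def mat_add_def mat_scale_def scale_radd mult.commute)
lemma I5: "x \<in> car n \<Longrightarrow> p \<in> car n \<Longrightarrow> y \<in> car m \<Longrightarrow> q \<in> car m \<Longrightarrow>
  mat_sub V (n + m) (mat_dsum V n m x y) (mat_dsum V n m p q) = mat_dsum V n m (mat_sub V n x p) (mat_sub V m y q)"
  by (intro ext) (auto simp: mat_sub_def mat_add_def mat_scale_def mat_dsum_def)
lemma I6: "x \<in> car n \<Longrightarrow> c \<noteq> 0 \<Longrightarrow> mat_scale V n (1 / c) (mat_scale V n c x) = x"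
  by (intro ext) (auto simp: mat_scale_def mat_out)

lemma lr_entry_add: assumes "x \<in> car n" "y \<in> car n"
  shows "vsum V (\<lambda>i. vsum V (\<lambda>j. vscale V (c i j) (mat_add V n x y i j)) n) n =
    vadd V (vsum V (\<lambda>i. vsum V (\<lambda>j. vscale V (c i j) (x i j)) n) n) (vsum V (\<lambda>i. vsum V (\<lambda>j. vscale V (c i j) (y i j)) n) n)"
proof -
  have inner: "vsum V (\<lambda>j. vscale V (c i j) (mat_add V n x y i j)) n =
     vadd V (vsum V (\<lambda>j. vscale V (c i j) (x i j)) n) (vsum V (\<lambda>j. vscale V (c i j) (y i j)) n)" if "i < n" for i
  proof -
    have "vsum V (\<lambda>j. vscale V (c i j) (mat_add V n x y i j)) n =
      vsum V (\<lambda>j. vadd V (vscale V (c i j) (x i j)) (vscale V (c i j) (y i j))) n"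
      by (rule vsum_cong) (use that assms in \<open>simp add: mat_add_def scale_radd\<close>)
    also have "\<dots> = vadd V (vsum V (\<lambda>j. vscale V (c i j) (x i j)) n) (vsum V (\<lambda>j. vscale V (c i j) (y i j)) n)"
      by (rule vsum_add) (use that assms in auto)
    finally show ?thesis .
  qed
  have "vsum V (\<lambda>i. vsum V (\<lambda>j. vscale V (c i j) (mat_add V n x y i j)) n) n =
     vsum V (\<lambda>i. vadd V (vsum V (\<lambda>j. vscale V (c i j) (x i j)) n) (vsum V (\<lambda>j. vscale V (c i j) (y i j)) n)) n"
    by (rule vsum_cong) (simp add: inner)
  also have "\<dots> = vadd V (vsum V (\<lambda>i. vsum V (\<lambda>j. vscale V (c i j) (x i j)) n) n) (vsum V (\<lambda>i. vsum V (\<lambda>j. vscale V (c i j) (y i j)) n) n)"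
    by (rule vsum_add) (use assms in auto)
  finally show ?thesis .
qed

lemma lr_entry_scale: assumes "x \<in> car n"
  shows "vsum V (\<lambda>i. vsum V (\<lambda>j. vscale V (c i j) (mat_scale V n d x i j)) n) n =
    vscale V d (vsum V (\<lambda>i. vsum V (\<lambda>j. vscale V (c i j) (x i j)) n) n)"
proof -
  have inner: "vsum V (\<lambda>j. vscale V (c i j) (mat_scale V n d x i j)) n =
     vscale V d (vsum V (\<lambda>j. vscale V (c i j) (x i j)) n)" if "i < n" for i
  proof -
    have "vsum V (\<lambda>j. vscale V (c i j) (mat_scale V n d x i j)) n =
      vsum V (\<lambda>j. vscale V d (vscale V (c i j) (x i j))) n"
      by (rule vsum_cong) (use that assms in \<open>simp add: mat_scale_def mult.commute\<close>)
    also have "\<dots> = vscale V d (vsum V (\<lambda>j. vscale V (c i j) (x i j)) n)"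
      by (rule vsum_scale) (use that assms in auto)
    finally show ?thesis .
  qed
  have "vsum V (\<lambda>i. vsum V (\<lambda>j. vscale V (c i j) (mat_scale V n d x i j)) n) n =
     vsum V (\<lambda>i. vscale V d (vsum V (\<lambda>j. vscale V (c i j) (x i j)) n)) n"
    by (rule vsum_cong) (simp add: inner)
  also have "\<dots> = vscale V d (vsum V (\<lambda>i. vsum V (\<lambda>j. vscale V (c i j) (x i j)) n) n)"
    by (rule vsum_scale) (use assms in auto)
  finally show ?thesis .
qed

lemma lr_add: "x \<in> car n \<Longrightarrow> y \<in> car n \<Longrightarrow>
  mat_lr V n m \<alpha> (mat_add V n x y) \<beta> = mat_add V m (mat_lr V n m \<alpha> x \<beta>) (mat_lr V n m \<alpha> y \<beta>)"
  by (intro ext) (simp add: mat_lr_def mat_add_def lr_entry_add[unfolded mat_add_def])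
lemma lr_scale: "x \<in> car n \<Longrightarrow>
  mat_lr V n m \<alpha> (mat_scale V n d x) \<beta> = mat_scale V m d (mat_lr V n m \<alpha> x \<beta>)"
  by (intro ext) (simp add: mat_lr_def mat_scale_def lr_entry_scale[unfolded mat_scale_def])
lemma lr_sub: "x \<in> car n \<Longrightarrow> y \<in> car n \<Longrightarrow>
  mat_lr V n m \<alpha> (mat_sub V n x y) \<beta> = mat_sub V m (mat_lr V n m \<alpha> x \<beta>) (mat_lr V n m \<alpha> y \<beta>)"
  by (simp add: mat_sub_def lr_add lr_scale)
lemma conj_sub: "x \<in> car n \<Longrightarrow> y \<in> car n \<Longrightarrow>
  mat_conj V n m \<alpha> (mat_sub V n x y) = mat_sub V m (mat_conj V n m \<alpha> x) (mat_conj V n m \<alpha> y)"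
  by (simp add: mat_conj_def lr_sub)

end

lemma mos_D1: assumes "matrix_ordered_os V" shows "\<forall>n\<ge>1. \<forall>x\<in>mpos V n. x \<in> mat_carrier V n \<and> mat_star V n x = x"
  using assms unfolding matrix_ordered_os_def by (elim conjE) assumption
lemma mos_D2: assumes "matrix_ordered_os V" shows "\<forall>n\<ge>1. mat_closure V n (mpos V n) \<subseteq> mpos V n"
  using assms unfolding matrix_ordered_os_def by (elim conjE) assumption
lemma mos_D3: assumes "matrix_ordered_os V" shows "\<forall>n\<ge>1. \<forall>x\<in>mpos V n. \<forall>y\<in>mpos V n. mat_add V n x y \<in> mpos V n"
  using assms unfolding matrix_ordered_os_def by (elim conjE) assumption
lemma mos_D4: assumes "matrix_ordered_os V" shows "\<forall>n\<ge>1. \<forall>t::real. t \<ge> 0 \<longrightarrow> (\<forall>x\<in>mpos V n. mat_scale V n (complex_of_real t) x \<in> mpos V n)"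
  using assms unfolding matrix_ordered_os_def by (elim conjE) assumption
lemma mos_D5: assumes "matrix_ordered_os V" shows "\<forall>n\<ge>1. \<forall>m\<ge>1. \<forall>x\<in>mpos V n. \<forall>\<alpha>. mat_conj V n m \<alpha> x \<in> mpos V m"
  using assms unfolding matrix_ordered_os_def by (elim conjE) assumption
lemma mos_D6: assumes "matrix_ordered_os V" shows "\<forall>n\<ge>1. \<forall>m\<ge>1. \<forall>x\<in>mpos V n. \<forall>y\<in>mpos V m. mat_dsum V n m x y \<in> mpos V (n + m)"
  using assms unfolding matrix_ordered_os_def by (elim conjE) assumption
lemma mos_D7: assumes "matrix_ordered_os V" shows "\<forall>n\<ge>1. \<forall>x\<in>mpos V n. mat_scale V n (-1) x \<in> mpos V n \<longrightarrow> x = mat_zero V"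
  using assms unfolding matrix_ordered_os_def by (elim conjE) assumption
lemmas mos_D = mos_D1 mos_D2 mos_D3 mos_D4 mos_D5 mos_D6 mos_D7

lemma vsum_cong_gen: "(\<And>i. i < k \<Longrightarrow> f i = g i) \<Longrightarrow> vsum V f k = vsum V g k"
  by (induction k) auto

locale qsetup =
  fixes X :: "('a, 'c) mos_scheme" and Y :: "('b, 'd) mos_scheme" and \<phi> :: "'a \<Rightarrow> 'b" and J :: "'a set"
  assumes mX: "matrix_ordered_os X" and mY: "matrix_ordered_os Y" and ccp: "ccp_map X Y \<phi>"
    and J_def: "J = kernel_of X Y \<phi>"
begin

sublocale X: cvs X
  by unfold_locales (use mX in \<open>simp add: matrix_ordered_os_def involutive_os_def operator_space_def\<close>)
sublocale Y: cvs Y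
  by unfold_locales (use mY in \<open>simp add: matrix_ordered_os_def involutive_os_def operator_space_def\<close>)

lemma osX: "operator_space X" using mX by (simp add: matrix_ordered_os_def involutive_os_def)
lemma osY: "operator_space Y" using mY by (simp add: matrix_ordered_os_def involutive_os_def)

lemma invX: "involutive_os X" using mX by (simp add: matrix_ordered_os_def)
lemma invY: "involutive_os Y" using mY by (simp add: matrix_ordered_os_def)

lemma X_nonneg: "n \<ge> 1 \<Longrightarrow> x \<in> X.car n \<Longrightarrow> 0 \<le> mnorm X n x"
  using osX unfolding operator_space_def by blast
lemma Y_nonneg: "n \<ge> 1 \<Longrightarrow> x \<in> Y.car n \<Longrightarrow> 0 \<le> mnorm Y n x"
  using osY unfolding operator_space_def by blast
lemma Y_def0: "n \<ge> 1 \<Longrightarrow> x \<in> Y.car n \<Longrightarrow> mnorm Y n x = 0 \<Longrightarrow> x = mat_zero Y"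
  using osY unfolding operator_space_def by blast
lemma X_scale_norm: "n \<ge> 1 \<Longrightarrow> x \<in> X.car n \<Longrightarrow> mnorm X n (mat_scale X n c x) = cmod c * mnorm X n x"
  using osX unfolding operator_space_def by blast
lemma X_tri: "n \<ge> 1 \<Longrightarrow> x \<in> X.car n \<Longrightarrow> y \<in> X.car n \<Longrightarrow> mnorm X n (mat_add X n x y) \<le> mnorm X n x + mnorm X n y"
  using osX unfolding operator_space_def by blast
lemma X_dsum_norm: "n \<ge> 1 \<Longrightarrow> m \<ge> 1 \<Longrightarrow> x \<in> X.car n \<Longrightarrow> y \<in> X.car m \<Longrightarrow>
    mnorm X (n + m) (mat_dsum X n m x y) = max (mnorm X n x) (mnorm X m y)"
  using osX unfolding operator_space_def by blast
lemma X_lr_norm: "n \<ge> 1 \<Longrightarrow> m \<ge> 1 \<Longrightarrow> x \<in> X.car n \<Longrightarrow>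
    mnorm X m (mat_lr X n m \<alpha> x \<beta>) \<le> cmat_norm m n \<alpha> * mnorm X n x * cmat_norm n m \<beta>"
  using osX unfolding operator_space_def by blast

lemma X_star_in[simp]: "a \<in> vcar X \<Longrightarrow> vstar X a \<in> vcar X"
  using invX unfolding involutive_os_def by blast
lemma X_star_star[simp]: "a \<in> vcar X \<Longrightarrow> vstar X (vstar X a) = a"
  using invX unfolding involutive_os_def by blast
lemma X_star_add: "a \<in> vcar X \<Longrightarrow> b \<in> vcar X \<Longrightarrow> vstar X (vadd X a b) = vadd X (vstar X a) (vstar X b)"
  using invX unfolding involutive_os_def by blast
lemma X_star_scale: "a \<in> vcar X \<Longrightarrow> vstar X (vscale X c a) = vscale X (cnj c) (vstar X a)"
  using invX unfolding involutive_os_def by blast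
lemma X_star_norm: "n \<ge> 1 \<Longrightarrow> x \<in> X.car n \<Longrightarrow> mnorm X n (mat_star X n x) = mnorm X n x"
  using invX unfolding involutive_os_def by blast
lemma Y_star_in[simp]: "a \<in> vcar Y \<Longrightarrow> vstar Y a \<in> vcar Y"
  using invY unfolding involutive_os_def by blast
lemma Y_star_scale: "a \<in> vcar Y \<Longrightarrow> vstar Y (vscale Y c a) = vscale Y (cnj c) (vstar Y a)"
  using invY unfolding involutive_os_def by blast

lemma X_pos_car: "n \<ge> 1 \<Longrightarrow> p \<in> mpos X n \<Longrightarrow> p \<in> X.car n"
  using mos_D(1)[OF mX] by blast
lemma X_pos_add: "n \<ge> 1 \<Longrightarrow> p \<in> mpos X n \<Longrightarrow> q \<in> mpos X n \<Longrightarrow> mat_add X n p q \<in> mpos X n"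
  using mos_D(3)[OF mX] by blast
lemma X_pos_scale: "n \<ge> 1 \<Longrightarrow> t \<ge> 0 \<Longrightarrow> p \<in> mpos X n \<Longrightarrow> mat_scale X n (complex_of_real t) p \<in> mpos X n"
  using mos_D(4)[OF mX] by blast
lemma X_pos_conj: "n \<ge> 1 \<Longrightarrow> m \<ge> 1 \<Longrightarrow> p \<in> mpos X n \<Longrightarrow> mat_conj X n m \<alpha> p \<in> mpos X m"
  using mos_D(5)[OF mX] by blast
lemma X_pos_dsum: "n \<ge> 1 \<Longrightarrow> m \<ge> 1 \<Longrightarrow> p \<in> mpos X n \<Longrightarrow> q \<in> mpos X m \<Longrightarrow> mat_dsum X n m p q \<in> mpos X (n + m)"
  using mos_D(6)[OF mX] by blast
lemma Y_pos_sa: "n \<ge> 1 \<Longrightarrow> p \<in> mpos Y n \<Longrightarrow> mat_star Y n p = p"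
  using mos_D(1)[OF mY] by blast
lemma Y_pos_closed: "n \<ge> 1 \<Longrightarrow> mat_closure Y n (mpos Y n) \<subseteq> mpos Y n"
  using mos_D(2)[OF mY] by blast
lemma Y_pos_proper: "n \<ge> 1 \<Longrightarrow> p \<in> mpos Y n \<Longrightarrow> mat_scale Y n (-1) p \<in> mpos Y n \<Longrightarrow> p = mat_zero Y"
  using mos_D(7)[OF mY] by blast

lemma phi_in[simp]: "a \<in> vcar X \<Longrightarrow> \<phi> a \<in> vcar Y"
  using ccp unfolding ccp_map_def by blast
lemma phi_add: "a \<in> vcar X \<Longrightarrow> b \<in> vcar X \<Longrightarrow> \<phi> (vadd X a b) = vadd Y (\<phi> a) (\<phi> b)"
  using ccp unfolding ccp_map_def by blast
lemma phi_scale: "a \<in> vcar X \<Longrightarrow> \<phi> (vscale X c a) = vscale Y c (\<phi> a)"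
  using ccp unfolding ccp_map_def by blast
lemma phi_star: "a \<in> vcar X \<Longrightarrow> \<phi> (vstar X a) = vstar Y (\<phi> a)"
  using ccp unfolding ccp_map_def by blast
lemma phi_contr: "n \<ge> 1 \<Longrightarrow> x \<in> X.car n \<Longrightarrow> mnorm Y n (mat_map Y n \<phi> x) \<le> mnorm X n x"
  using ccp unfolding ccp_map_def by blast
lemma phi_pos: "n \<ge> 1 \<Longrightarrow> x \<in> mpos X n \<Longrightarrow> mat_map Y n \<phi> x \<in> mpos Y n"
  using ccp unfolding ccp_map_def by blast

lemma phi_zero[simp]: "\<phi> (vzero X) = vzero Y"
  by (metis X.scale_zero_left X.zero_in Y.scale_zero_left phi_in phi_scale)

lemma J_eq: "J = {a \<in> vcar X. \<phi> a = vzero Y}"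
  by (simp add: J_def kernel_of_def)

lemma J_mem: "j \<in> J \<longleftrightarrow> j \<in> vcar X \<and> \<phi> j = vzero Y"
  by (simp add: J_eq)

lemma coset_fib: assumes a: "a \<in> vcar X" shows "coset X J a = {y \<in> vcar X. \<phi> y = \<phi> a}"
proof (intro set_eqI iffI)
  fix y assume "y \<in> coset X J a"
  then obtain j where j: "j \<in> J" "y = vadd X a j" unfolding coset_def by auto
  then show "y \<in> {y \<in> vcar X. \<phi> y = \<phi> a}" using a by (auto simp: J_mem phi_add)
next
  fix y assume y: "y \<in> {y \<in> vcar X. \<phi> y = \<phi> a}"
  define j where "j = vadd X (vscale X (-1) a) y"
  have "j \<in> J" using y a unfolding J_mem j_def
    by (auto simp: phi_add phi_scale Y.neg_add)
  moreover have "y = vadd X a j" using y a unfolding j_def by (simp add: X.add_neg_cancel)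
  ultimately show "y \<in> coset X J a" unfolding coset_def by auto
qed

lemma mem_coset: "a \<in> vcar X \<Longrightarrow> y \<in> coset X J a \<longleftrightarrow> y \<in> vcar X \<and> \<phi> y = \<phi> a"
  by (simp add: coset_fib)

lemma coset_self: "a \<in> vcar X \<Longrightarrow> a \<in> coset X J a" by (simp add: coset_fib)
lemma coset_zero[simp]: "coset X J (vzero X) = J" by (subst coset_fib) (auto simp: J_mem)
lemma coset_eq: "a \<in> vcar X \<Longrightarrow> b \<in> vcar X \<Longrightarrow> coset X J a = coset X J b \<longleftrightarrow> \<phi> a = \<phi> b"
  by (auto simp: coset_fib)
lemma J_sub: "J \<subseteq> vcar X" by (auto simp: J_eq)

abbreviation Q where "Q \<equiv> quot X J"

lemma Q_car: "vcar Q = {coset X J a | a. a \<in> vcar X}" by (simp add: quot_def quot_base_def)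
lemma Q_zero: "vzero Q = J" by (simp add: quot_def quot_base_def)
lemma Q_add: assumes "a \<in> vcar X" "b \<in> vcar X"
  shows "vadd Q (coset X J a) (coset X J b) = coset X J (vadd X a b)"
proof -
  have "vadd Q (coset X J a) (coset X J b) = {vadd X a' b' | a' b'. a' \<in> coset X J a \<and> b' \<in> coset X J b}"
    by (simp add: quot_def quot_base_def)
  also have "\<dots> = coset X J (vadd X a b)"
  proof (intro set_eqI iffI)
    fix y assume "y \<in> {vadd X a' b' | a' b'. a' \<in> coset X J a \<and> b' \<in> coset X J b}"
    then show "y \<in> coset X J (vadd X a b)" using assms by (auto simp: mem_coset phi_add)
  next
    fix y assume "y \<in> coset X J (vadd X a b)"
    then obtain j where j: "j \<in> J" "y = vadd X (vadd X a b) j" unfolding coset_def by auto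
    have "vadd X a j \<in> coset X J a" unfolding coset_def using j by auto
    moreover have "y = vadd X (vadd X a j) b" using j assms J_sub by (auto simp: X.add_ac)
    ultimately show "y \<in> {vadd X a' b' | a' b'. a' \<in> coset X J a \<and> b' \<in> coset X J b}"
      using coset_self assms by blast
  qed
  finally show ?thesis .
qed
lemma Q_scale: assumes "a \<in> vcar X"
  shows "vscale Q c (coset X J a) = coset X J (vscale X c a)"
proof -
  have "vscale Q c (coset X J a) = {vadd X (vscale X c a') j | a' j. a' \<in> coset X J a \<and> j \<in> J}"
    by (simp add: quot_def quot_base_def)
  also have "\<dots> = coset X J (vscale X c a)"
  proof (intro set_eqI iffI)
    fix y assume "y \<in> {vadd X (vscale X c a') j | a' j. a' \<in> coset X J a \<and> j \<in> J}"
    then show "y \<in> coset X J (vscale X c a)" using assms by (auto simp: mem_coset phi_add phi_scale J_mem)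
  next
    fix y assume "y \<in> coset X J (vscale X c a)"
    then obtain j where j: "j \<in> J" "y = vadd X (vscale X c a) j" unfolding coset_def by auto
    then show "y \<in> {vadd X (vscale X c a') j | a' j. a' \<in> coset X J a \<and> j \<in> J}"
      using coset_self assms by blast
  qed
  finally show ?thesis .
qed
lemma Q_star: assumes "a \<in> vcar X"
  shows "vstar Q (coset X J a) = coset X J (vstar X a)"
proof -
  have "vstar Q (coset X J a) = {vadd X (vstar X a') j | a' j. a' \<in> coset X J a \<and> j \<in> J}"
    by (simp add: quot_def quot_base_def)
  also have "\<dots> = coset X J (vstar X a)"
  proof (intro set_eqI iffI)
    fix y assume "y \<in> {vadd X (vstar X a') j | a' j. a' \<in> coset X J a \<and> j \<in> J}"
    then show "y \<in> coset X J (vstar X a)" using assms by (auto simp: mem_coset phi_add phi_star J_mem)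
  next
    fix y assume "y \<in> coset X J (vstar X a)"
    then obtain j where j: "j \<in> J" "y = vadd X (vstar X a) j" unfolding coset_def by auto
    then show "y \<in> {vadd X (vstar X a') j | a' j. a' \<in> coset X J a \<and> j \<in> J}"
      using coset_self assms by blast
  qed
  finally show ?thesis .
qed
lemma Q_mnorm: "mnorm Q n S = Inf {mnorm X n y | y. y \<in> mat_carrier X n \<and> (\<forall>i<n. \<forall>j<n. y i j \<in> S i j)}"
  by (simp add: quot_def quot_base_def)
lemma Qb_car: "vcar Q = vcar (quot_base X J)" by (simp add: quot_def)
lemma Qb_zero: "vzero Q = vzero (quot_base X J)" by (simp add: quot_def)
lemma Qb_add: "vadd Q = vadd (quot_base X J)" by (simp add: quot_def)
lemma Qb_scale: "vscale Q = vscale (quot_base X J)" by (simp add: quot_def)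
lemma Qb_mnorm: "mnorm Q = mnorm (quot_base X J)" by (simp add: quot_def)
lemma Q_closure: "mat_closure Q n S = mat_closure (quot_base X J) n S"
  unfolding mat_closure_def mat_carrier_def mat_sub_def mat_add_def mat_scale_def
  by (simp only: Qb_car Qb_zero Qb_add Qb_scale Qb_mnorm)
lemma Q_mpos: "mpos Q n = mat_closure Q n {(\<lambda>i j. coset X J (x i j)) | x. x \<in> mpos X n}"
  unfolding Q_closure by (simp add: quot_def)


definition cm :: "(nat \<Rightarrow> nat \<Rightarrow> 'a) \<Rightarrow> nat \<Rightarrow> nat \<Rightarrow> 'a set" where
  "cm x = (\<lambda>i j. coset X J (x i j))"
abbreviation Phi where "Phi n x \<equiv> mat_map Y n \<phi> x"

lemma cm_in[simp]: "x \<in> X.car n \<Longrightarrow> cm x \<in> mat_carrier Q n"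
  unfolding mat_carrier_def by (auto simp: cm_def Q_car Q_zero X.mat_out)

lemma cm_rep: assumes S: "S \<in> mat_carrier Q n" shows "\<exists>x\<in>X.car n. S = cm x"
proof -
  have ex: "\<exists>a. a \<in> vcar X \<and> S i j = coset X J a" if "i < n" "j < n" for i j
    using S that unfolding mat_carrier_def Q_car by blast
  define x where "x = (\<lambda>i j. if i < n \<and> j < n then (SOME a. a \<in> vcar X \<and> S i j = coset X J a) else vzero X)"
  have x: "x i j \<in> vcar X \<and> S i j = coset X J (x i j)" if "i < n" "j < n" for i j
    using someI_ex[OF ex[OF that]] that unfolding x_def by simp
  have "x \<in> X.car n" by (rule X.mat_carI) (use x in \<open>auto simp: x_def\<close>)
  moreover have "S = cm x"
  proof (intro ext)
    fix i j show "S i j = cm x i j"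
    proof (cases "i < n \<and> j < n")
      case True then show ?thesis using x by (simp add: cm_def)
    next
      case False then show ?thesis using S unfolding mat_carrier_def cm_def x_def by (auto simp: Q_zero)
    qed
  qed
  ultimately show ?thesis by blast
qed

lemma Phi_in[simp]: "x \<in> X.car n \<Longrightarrow> Phi n x \<in> Y.car n"
  by (rule Y.mat_carI) (auto simp: mat_map_def)

lemma cm_eq: assumes "x \<in> X.car n" "y \<in> X.car n" shows "cm x = cm y \<longleftrightarrow> Phi n x = Phi n y"
proof
  assume h: "cm x = cm y"
  show "Phi n x = Phi n y"
  proof (intro ext)
    fix i j show "Phi n x i j = Phi n y i j"
      using fun_cong[OF fun_cong[OF h, of i], of j] assms by (auto simp: mat_map_def cm_def coset_eq)
  qed
next
  assume h: "Phi n x = Phi n y"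
  show "cm x = cm y"
  proof (intro ext)
    fix i j show "cm x i j = cm y i j"
      using fun_cong[OF fun_cong[OF h, of i], of j] assms
      by (cases "i < n \<and> j < n") (auto simp: mat_map_def cm_def coset_eq X.mat_out)
  qed
qed

lemma Q_mat_zero: "mat_zero Q = cm (mat_zero X)" by (simp add: mat_zero_def cm_def Q_zero)
lemma Phi_zero: "Phi n (mat_zero X) = mat_zero Y" by (intro ext) (auto simp: mat_map_def mat_zero_def)
lemma Phi_add: "x \<in> X.car n \<Longrightarrow> y \<in> X.car n \<Longrightarrow> Phi n (mat_add X n x y) = mat_add Y n (Phi n x) (Phi n y)"
  by (intro ext) (auto simp: mat_map_def mat_add_def phi_add)
lemma Phi_scale: "x \<in> X.car n \<Longrightarrow> Phi n (mat_scale X n c x) = mat_scale Y n c (Phi n x)"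
  by (intro ext) (auto simp: mat_map_def mat_scale_def phi_scale)
lemma Phi_sub: "x \<in> X.car n \<Longrightarrow> y \<in> X.car n \<Longrightarrow> Phi n (mat_sub X n x y) = mat_sub Y n (Phi n x) (Phi n y)"
  by (simp add: mat_sub_def Phi_add Phi_scale)
lemma Phi_star: "x \<in> X.car n \<Longrightarrow> Phi n (mat_star X n x) = mat_star Y n (Phi n x)"
  by (intro ext) (auto simp: mat_map_def mat_star_def phi_star)

lemma mat_star_in[simp]: "x \<in> X.car n \<Longrightarrow> mat_star X n x \<in> X.car n"
  by (rule X.mat_carI) (auto simp: mat_star_def)
lemma mat_star_star: "x \<in> X.car n \<Longrightarrow> mat_star X n (mat_star X n x) = x"
  by (intro ext) (auto simp: mat_star_def X.mat_out)

lemma cm_add: "x \<in> X.car n \<Longrightarrow> y \<in> X.car n \<Longrightarrow> mat_add Q n (cm x) (cm y) = cm (mat_add X n x y)"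
  by (intro ext) (auto simp: mat_add_def cm_def Q_add Q_zero)
lemma cm_scale: "x \<in> X.car n \<Longrightarrow> mat_scale Q n c (cm x) = cm (mat_scale X n c x)"
  by (intro ext) (auto simp: mat_scale_def cm_def Q_scale Q_zero)
lemma cm_sub: "x \<in> X.car n \<Longrightarrow> y \<in> X.car n \<Longrightarrow> mat_sub Q n (cm x) (cm y) = cm (mat_sub X n x y)"
  by (simp add: mat_sub_def cm_scale cm_add)
lemma cm_star: "x \<in> X.car n \<Longrightarrow> mat_star Q n (cm x) = cm (mat_star X n x)"
  by (intro ext) (auto simp: mat_star_def cm_def Q_star Q_zero)
lemma cm_dsum: "x \<in> X.car n \<Longrightarrow> y \<in> X.car m \<Longrightarrow> mat_dsum Q n m (cm x) (cm y) = cm (mat_dsum X n m x y)"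
  by (intro ext) (auto simp: mat_dsum_def cm_def Q_zero)

lemma vsum_Q: "(\<And>i. i < k \<Longrightarrow> f i \<in> vcar X) \<Longrightarrow> vsum Q (\<lambda>i. coset X J (f i)) k = coset X J (vsum X f k)"
  by (induction k) (auto simp: Q_zero Q_add)

lemma cm_lr: assumes x: "x \<in> X.car n" shows "mat_lr Q n m \<alpha> (cm x) \<beta> = cm (mat_lr X n m \<alpha> x \<beta>)"
proof (intro ext)
  fix k l
  show "mat_lr Q n m \<alpha> (cm x) \<beta> k l = cm (mat_lr X n m \<alpha> x \<beta>) k l"
  proof (cases "k < m \<and> l < m")
    case True
    have inner: "vsum Q (\<lambda>j. vscale Q (\<alpha> k i * \<beta> j l) (cm x i j)) n =
       coset X J (vsum X (\<lambda>j. vscale X (\<alpha> k i * \<beta> j l) (x i j)) n)" if "i < n" for i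
    proof -
      have "vsum Q (\<lambda>j. vscale Q (\<alpha> k i * \<beta> j l) (cm x i j)) n =
          vsum Q (\<lambda>j. coset X J (vscale X (\<alpha> k i * \<beta> j l) (x i j))) n"
        by (rule vsum_cong_gen) (use x that in \<open>simp add: cm_def Q_scale\<close>)
      also have "\<dots> = coset X J (vsum X (\<lambda>j. vscale X (\<alpha> k i * \<beta> j l) (x i j)) n)"
        by (rule vsum_Q) (use x that in simp)
      finally show ?thesis .
    qed
    have "vsum Q (\<lambda>i. vsum Q (\<lambda>j. vscale Q (\<alpha> k i * \<beta> j l) (cm x i j)) n) n =
        vsum Q (\<lambda>i. coset X J (vsum X (\<lambda>j. vscale X (\<alpha> k i * \<beta> j l) (x i j)) n)) n"
      by (rule vsum_cong_gen) (simp add: inner)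
    also have "\<dots> = coset X J (vsum X (\<lambda>i. vsum X (\<lambda>j. vscale X (\<alpha> k i * \<beta> j l) (x i j)) n) n)"
      by (rule vsum_Q) (use x in simp)
    finally show ?thesis using True by (simp add: mat_lr_def cm_def)
  next
    case False then have "\<not> (k < m \<and> l < m)" by simp
    then have "mat_lr X n m \<alpha> x \<beta> k l = vzero X" "mat_lr Q n m \<alpha> (cm x) \<beta> k l = vzero Q"
      unfolding mat_lr_def by auto
    then show ?thesis by (simp add: cm_def Q_zero)
  qed
qed
lemma cm_conj: "x \<in> X.car n \<Longrightarrow> mat_conj Q n m \<alpha> (cm x) = cm (mat_conj X n m \<alpha> x)"
  by (simp add: mat_conj_def cm_lr)

definition lifts where "lifts n x = {y \<in> X.car n. Phi n y = Phi n x}"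
definition qn where "qn n x = Inf (mnorm X n ` lifts n x)"

lemma lifts_iff: assumes "x \<in> X.car n" "y \<in> X.car n"
  shows "(\<forall>i<n. \<forall>j<n. y i j \<in> cm x i j) \<longleftrightarrow> Phi n y = Phi n x"
proof
  assume h: "\<forall>i<n. \<forall>j<n. y i j \<in> cm x i j"
  show "Phi n y = Phi n x"
    by (intro ext) (use h assms in \<open>auto simp: mat_map_def cm_def mem_coset\<close>)
next
  assume h: "Phi n y = Phi n x"
  show "\<forall>i<n. \<forall>j<n. y i j \<in> cm x i j"
  proof (intro allI impI)
    fix i j assume "i < n" "j < n"
    then show "y i j \<in> cm x i j"
      using fun_cong[OF fun_cong[OF h, of i], of j] assms by (simp add: mat_map_def cm_def mem_coset)
  qed
qed

lemma Q_norm_cm: assumes "x \<in> X.car n" shows "mnorm Q n (cm x) = qn n x"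
proof -
  have "{mnorm X n y | y. y \<in> mat_carrier X n \<and> (\<forall>i<n. \<forall>j<n. y i j \<in> cm x i j)} = mnorm X n ` lifts n x"
    using lifts_iff[OF assms] unfolding lifts_def by blast
  then show ?thesis by (simp add: Q_mnorm qn_def)
qed

end

definition sel :: "nat \<Rightarrow> nat \<Rightarrow> nat \<Rightarrow> complex" where
  "sel s k i = (if i = k + s then 1 else 0)"

lemma sum_shift_le:
  fixes f :: "nat \<Rightarrow> real"
  assumes "p + s \<le> N" "\<And>j. 0 \<le> f j"
  shows "(\<Sum>i<p. f (i + s)) \<le> (\<Sum>j<N. f j)"
proof -
  have "(\<Sum>i<p. f (i + s)) = sum f ((\<lambda>i. i + s) ` {..<p})"
    by (subst sum.reindex) (auto simp: inj_on_def)
  also have "\<dots> \<le> sum f {..<N}"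
    by (rule sum_mono2) (use assms in auto)
  finally show ?thesis .
qed

lemma cmat_norm_bounds:
  assumes "\<And>v. (\<Sum>j<n. (cmod (v j))\<^sup>2) \<le> 1 \<Longrightarrow> (\<Sum>i<m. (cmod (\<Sum>j<n. \<alpha> i j * v j))\<^sup>2) \<le> 1"
  shows "0 \<le> cmat_norm m n \<alpha> \<and> cmat_norm m n \<alpha> \<le> 1"
proof -
  let ?S = "{sqrt (\<Sum>i<m. (cmod (\<Sum>j<n. \<alpha> i j * v j))\<^sup>2) | v. (\<Sum>j<n. (cmod (v j))\<^sup>2) \<le> 1}"
  have ub: "s \<le> 1" if "s \<in> ?S" for s using that assms by auto
  have z: "0 \<in> ?S"
  proof -
    show ?thesis unfolding mem_Collect_eq by (rule exI[of _ "\<lambda>_. 0"]) simp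
  qed
  have "bdd_above ?S" using ub by (intro bdd_aboveI) blast
  then have "0 \<le> Sup ?S" using z by (rule cSup_upper[rotated])
  moreover have "Sup ?S \<le> 1" by (rule cSup_least[OF _ ub]) (use z in blast)
  ultimately show ?thesis unfolding cmat_norm_def by simp
qed

lemma sel_left: assumes "p + s \<le> N"
  shows "0 \<le> cmat_norm p N (sel s) \<and> cmat_norm p N (sel s) \<le> 1"
proof (rule cmat_norm_bounds)
  fix v :: "nat \<Rightarrow> complex" assume v: "(\<Sum>j<N. (cmod (v j))\<^sup>2) \<le> 1"
  have "(\<Sum>j<N. sel s i j * v j) = v (i + s)" if "i < p" for i
  proof -
    have "(\<Sum>j<N. sel s i j * v j) = (\<Sum>j<N. if j = i + s then v j else 0)"
      by (rule sum.cong) (auto simp: sel_def)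
    also have "\<dots> = v (i + s)" using that assms by (subst sum.delta) auto
    finally show ?thesis .
  qed
  then have "(\<Sum>i<p. (cmod (\<Sum>j<N. sel s i j * v j))\<^sup>2) = (\<Sum>i<p. (cmod (v (i + s)))\<^sup>2)"
    by (intro sum.cong) auto
  also have "\<dots> \<le> (\<Sum>j<N. (cmod (v j))\<^sup>2)"
    by (rule sum_shift_le[where f = "\<lambda>j. (cmod (v j))\<^sup>2"]) (use assms in auto)
  finally show "(\<Sum>i<p. (cmod (\<Sum>j<N. sel s i j * v j))\<^sup>2) \<le> 1" using v by linarith
qed

lemma sel_right: assumes "p + s \<le> N"
  shows "0 \<le> cmat_norm N p (\<lambda>j l. sel s l j) \<and> cmat_norm N p (\<lambda>j l. sel s l j) \<le> 1"
proof (rule cmat_norm_bounds)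
  fix v :: "nat \<Rightarrow> complex" assume v: "(\<Sum>j<p. (cmod (v j))\<^sup>2) \<le> 1"
  define w where "w i = (if s \<le> i \<and> i - s < p then v (i - s) else 0)" for i
  have "(\<Sum>l<p. sel s l i * v l) = w i" for i
  proof -
    have "(\<Sum>l<p. sel s l i * v l) = (\<Sum>l<p. if l = i - s \<and> s \<le> i then v l else 0)"
      by (rule sum.cong) (auto simp: sel_def)
    also have "\<dots> = w i" unfolding w_def
      by (cases "s \<le> i") (auto simp: sum.delta)
    finally show ?thesis .
  qed
  then have "(\<Sum>i<N. (cmod (\<Sum>l<p. sel s l i * v l))\<^sup>2) = (\<Sum>i<N. (cmod (w i))\<^sup>2)" by simp
  also have "\<dots> = (\<Sum>i\<in>(\<lambda>l. l + s) ` {..<p}. (cmod (w i))\<^sup>2)"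
  proof (rule sum.mono_neutral_right)
    show "(\<lambda>l. l + s) ` {..<p} \<subseteq> {..<N}" using assms by auto
    show "\<forall>i\<in>{..<N} - (\<lambda>l. l + s) ` {..<p}. (cmod (w i))\<^sup>2 = 0"
    proof
      fix i assume i: "i \<in> {..<N} - (\<lambda>l. l + s) ` {..<p}"
      show "(cmod (w i))\<^sup>2 = 0"
      proof (cases "s \<le> i \<and> i - s < p")
        case True
        then have "i \<in> (\<lambda>l. l + s) ` {..<p}" by (intro image_eqI[of _ _ "i - s"]) auto
        then show ?thesis using i by auto
      qed (auto simp: w_def)
    qed
  qed simp
  also have "\<dots> = (\<Sum>l<p. (cmod (v l))\<^sup>2)"
    by (subst sum.reindex) (auto simp: inj_on_def w_def)
  finally show "(\<Sum>i<N. (cmod (\<Sum>l<p. sel s l i * v l))\<^sup>2) \<le> 1" using v by linarith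
qed


context cvs
begin

lemma comp_entry:
  assumes z: "z \<in> car N" and kl: "k < p" "l < p" "k + s < N" "l + s < N"
  shows "mat_lr V N p (sel s) z (\<lambda>j l. sel s l j) k l = z (k + s) (l + s)"
proof -
  have inner: "vsum V (\<lambda>j. vscale V (sel s k i * sel s l j) (z i j)) N = vscale V (sel s k i) (z i (l + s))"
    if i: "i < N" for i
  proof -
    have "vsum V (\<lambda>j. vscale V (sel s k i * sel s l j) (z i j)) N =
        (\<lambda>j. vscale V (sel s k i * sel s l j) (z i j)) (l + s)"
      by (rule vsum_delta) (use z i kl in \<open>auto simp: sel_def\<close>)
    then show ?thesis by (simp add: sel_def)
  qed
  have "vsum V (\<lambda>i. vsum V (\<lambda>j. vscale V (sel s k i * sel s l j) (z i j)) N) N =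
      vsum V (\<lambda>i. vscale V (sel s k i) (z i (l + s))) N"
    by (rule vsum_cong) (simp add: inner)
  also have "\<dots> = (\<lambda>i. vscale V (sel s k i) (z i (l + s))) (k + s)"
    by (rule vsum_delta) (use z kl in \<open>auto simp: sel_def\<close>)
  also have "\<dots> = z (k + s) (l + s)" using z kl by (simp add: sel_def)
  finally show ?thesis using kl by (simp add: mat_lr_def)
qed

end

context qsetup
begin

lemma lift_self: "x \<in> X.car n \<Longrightarrow> x \<in> lifts n x" by (simp add: lifts_def)
lemma lifts_car: "y \<in> lifts n x \<Longrightarrow> y \<in> X.car n" by (simp add: lifts_def)
lemma bdd_lifts: "n \<ge> 1 \<Longrightarrow> bdd_below (mnorm X n ` lifts n x)"
  by (rule bdd_belowI[of _ 0]) (auto simp: lifts_def X_nonneg)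
lemma qn_le: "n \<ge> 1 \<Longrightarrow> y \<in> lifts n x \<Longrightarrow> qn n x \<le> mnorm X n y"
  unfolding qn_def by (rule cINF_lower[OF bdd_lifts])
lemma qn_ge: "x \<in> X.car n \<Longrightarrow> (\<And>y. y \<in> lifts n x \<Longrightarrow> a \<le> mnorm X n y) \<Longrightarrow> a \<le> qn n x"
  unfolding qn_def by (rule cINF_greatest) (auto dest: lift_self)
lemma qn_nonneg: "n \<ge> 1 \<Longrightarrow> x \<in> X.car n \<Longrightarrow> 0 \<le> qn n x"
  by (rule qn_ge) (auto simp: lifts_def X_nonneg)
lemma qn_le_norm: "n \<ge> 1 \<Longrightarrow> x \<in> X.car n \<Longrightarrow> qn n x \<le> mnorm X n x"
  by (rule qn_le) (simp_all add: lift_self)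
lemma qn_cong: "Phi n x = Phi n x' \<Longrightarrow> qn n x = qn n x'"
  unfolding qn_def lifts_def by simp

lemma qn_ge_mult:
  assumes n: "n \<ge> 1" and x: "x \<in> X.car n" and K: "K \<ge> 0"
    and h: "\<And>y. y \<in> lifts n x \<Longrightarrow> a \<le> K * mnorm X n y"
  shows "a \<le> K * qn n x"
proof (cases "K = 0")
  case True
  then show ?thesis using h[OF lift_self[OF x]] by simp
next
  case False
  then have Kp: "K > 0" using K by simp
  have "a / K \<le> qn n x"
  proof (rule qn_ge[OF x])
    fix y assume "y \<in> lifts n x"
    then show "a / K \<le> mnorm X n y" using h Kp by (simp add: divide_le_eq mult.commute)
  qed
  then show ?thesis using Kp by (simp add: divide_le_eq mult.commute)
qed

lemma Phi_norm_le: assumes n: "n \<ge> 1" and x: "x \<in> X.car n" shows "mnorm Y n (Phi n x) \<le> qn n x"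
proof (rule qn_ge[OF x])
  fix y assume y: "y \<in> lifts n x"
  then have "Phi n x = Phi n y" "y \<in> X.car n" by (auto simp: lifts_def)
  then show "mnorm Y n (Phi n x) \<le> mnorm X n y" using phi_contr[OF n] by simp
qed

lemma lifts_cm: "x \<in> X.car n \<Longrightarrow> y \<in> X.car n \<Longrightarrow> cm y = cm x \<Longrightarrow> y \<in> lifts n x"
  by (simp add: lifts_def cm_eq)
lemma lifts_cmD: "x \<in> X.car n \<Longrightarrow> y \<in> lifts n x \<Longrightarrow> cm y = cm x"
  unfolding lifts_def using cm_eq by blast

lemma qn_tri: assumes n: "n \<ge> 1" and x: "x \<in> X.car n" and y: "y \<in> X.car n"
  shows "qn n (mat_add X n x y) \<le> qn n x + qn n y"
proof -
  have key: "qn n (mat_add X n x y) \<le> mnorm X n y1 + mnorm X n y2"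
    if y1: "y1 \<in> lifts n x" and y2: "y2 \<in> lifts n y" for y1 y2
  proof -
    have c: "y1 \<in> X.car n" "y2 \<in> X.car n" using y1 y2 by (auto simp: lifts_def)
    have "mat_add X n y1 y2 \<in> lifts n (mat_add X n x y)"
      using y1 y2 c x y by (auto simp: lifts_def Phi_add)
    then have "qn n (mat_add X n x y) \<le> mnorm X n (mat_add X n y1 y2)" by (rule qn_le[OF n])
    also have "\<dots> \<le> mnorm X n y1 + mnorm X n y2" using X_tri[OF n c] .
    finally show ?thesis .
  qed
  have "qn n (mat_add X n x y) - qn n x \<le> mnorm X n y2" if y2: "y2 \<in> lifts n y" for y2
  proof -
    have "qn n (mat_add X n x y) - mnorm X n y2 \<le> qn n x"
      by (rule qn_ge[OF x]) (use key y2 in force)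
    then show ?thesis by linarith
  qed
  then have "qn n (mat_add X n x y) - qn n x \<le> qn n y" by (rule qn_ge[OF y])
  then show ?thesis by linarith
qed

lemma qn_scale_le: assumes n: "n \<ge> 1" and x: "x \<in> X.car n"
  shows "qn n (mat_scale X n c x) \<le> cmod c * qn n x"
proof (rule qn_ge_mult[OF n x])
  fix y assume y: "y \<in> lifts n x"
  then have c: "y \<in> X.car n" by (simp add: lifts_def)
  have "mat_scale X n c y \<in> lifts n (mat_scale X n c x)"
    using y c x by (auto simp: lifts_def Phi_scale)
  then have "qn n (mat_scale X n c x) \<le> mnorm X n (mat_scale X n c y)" by (rule qn_le[OF n])
  then show "qn n (mat_scale X n c x) \<le> cmod c * mnorm X n y" using X_scale_norm[OF n c] by simp
qed simp

lemma qn_scale: assumes n: "n \<ge> 1" and x: "x \<in> X.car n"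
  shows "qn n (mat_scale X n c x) = cmod c * qn n x"
proof (cases "c = 0")
  case True
  then show ?thesis using qn_scale_le[OF n x, of c] qn_nonneg[OF n, of "mat_scale X n c x"] x by simp
next
  case False
  have "qn n x = qn n (mat_scale X n (1 / c) (mat_scale X n c x))" using X.I6[OF x False] by simp
  also have "\<dots> \<le> cmod (1 / c) * qn n (mat_scale X n c x)" by (rule qn_scale_le[OF n]) (use x in simp)
  finally have "cmod c * qn n x \<le> qn n (mat_scale X n c x)"
    using False by (simp add: norm_divide field_simps)
  then show ?thesis using qn_scale_le[OF n x, of c] by simp
qed

lemma qn_star_le: assumes n: "n \<ge> 1" and x: "x \<in> X.car n"
  shows "qn n (mat_star X n x) \<le> qn n x"
proof (rule qn_ge[OF x])
  fix y assume y: "y \<in> lifts n x"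
  then have c: "y \<in> X.car n" by (simp add: lifts_def)
  have "mat_star X n y \<in> lifts n (mat_star X n x)"
    using y c x by (auto simp: lifts_def Phi_star)
  then have "qn n (mat_star X n x) \<le> mnorm X n (mat_star X n y)" by (rule qn_le[OF n])
  then show "qn n (mat_star X n x) \<le> mnorm X n y" using X_star_norm[OF n c] by simp
qed

lemma qn_star: assumes n: "n \<ge> 1" and x: "x \<in> X.car n"
  shows "qn n (mat_star X n x) = qn n x"
  using qn_star_le[OF n x] qn_star_le[OF n mat_star_in[OF x]] mat_star_star[OF x] by simp

lemma qn_lr: assumes n: "n \<ge> 1" and m: "m \<ge> 1" and x: "x \<in> X.car n"
  shows "qn m (mat_lr X n m \<alpha> x \<beta>) \<le> cmat_norm m n \<alpha> * qn n x * cmat_norm n m \<beta>"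
proof -
  define K where "K = cmat_norm m n \<alpha> * cmat_norm n m \<beta>"
  have key: "qn m (mat_lr X n m \<alpha> x \<beta>) \<le> K * mnorm X n y" if y: "y \<in> lifts n x" for y
  proof -
    have c: "y \<in> X.car n" using y by (simp add: lifts_def)
    have "cm (mat_lr X n m \<alpha> y \<beta>) = cm (mat_lr X n m \<alpha> x \<beta>)"
      using cm_lr[OF c] cm_lr[OF x] lifts_cmD[OF x y] by metis
    then have "mat_lr X n m \<alpha> y \<beta> \<in> lifts m (mat_lr X n m \<alpha> x \<beta>)"
      by (intro lifts_cm) (use c x in simp_all)
    then have "qn m (mat_lr X n m \<alpha> x \<beta>) \<le> mnorm X m (mat_lr X n m \<alpha> y \<beta>)" by (rule qn_le[OF m])
    also have "\<dots> \<le> cmat_norm m n \<alpha> * mnorm X n y * cmat_norm n m \<beta>" by (rule X_lr_norm[OF n m c])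
    finally show ?thesis by (simp add: K_def algebra_simps)
  qed
  show ?thesis
  proof (cases "K \<ge> 0")
    case True
    have "qn m (mat_lr X n m \<alpha> x \<beta>) \<le> K * qn n x"
      by (rule qn_ge_mult[OF n x True key])
    then show ?thesis by (simp add: K_def algebra_simps)
  next
    case False
    have a: "qn m (mat_lr X n m \<alpha> x \<beta>) \<le> K * mnorm X n x" using key[OF lift_self[OF x]] .
    have b: "0 \<le> qn m (mat_lr X n m \<alpha> x \<beta>)" by (rule qn_nonneg[OF m]) (use x in simp)
    have c: "0 \<le> mnorm X n x" using X_nonneg[OF n x] .
    from a b c False have "mnorm X n x = 0"
      by (metis antisym_conv1 dual_order.trans linorder_not_le mult_neg_pos)
    then have "qn n x = 0" using qn_le_norm[OF n x] qn_nonneg[OF n x] by simp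
    then show ?thesis using a \<open>mnorm X n x = 0\<close> by simp
  qed
qed


abbreviation compr where "compr N p s z \<equiv> mat_lr X N p (sel s) z (\<lambda>j l. sel s l j)"

lemma comp_bound: assumes N: "N \<ge> 1" and p: "p \<ge> 1" and ps: "p + s \<le> N" and z: "z \<in> X.car N"
  shows "mnorm X p (compr N p s z) \<le> mnorm X N z"
proof -
  have "mnorm X p (compr N p s z) \<le> cmat_norm p N (sel s) * mnorm X N z * cmat_norm N p (\<lambda>j l. sel s l j)"
    by (rule X_lr_norm[OF N p z])
  also have "\<dots> \<le> 1 * mnorm X N z * 1"
    using sel_left[OF ps] sel_right[OF ps] X_nonneg[OF N z]
    by (intro mult_mono) auto
  finally show ?thesis by simp
qed

lemma comp_Phi: assumes z: "z \<in> X.car N" and ps: "p + s \<le> N" and kl: "k < p" "l < p"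
  shows "Phi p (compr N p s z) k l = \<phi> (z (k + s) (l + s))"
  using X.comp_entry[OF z kl] kl ps by (simp add: mat_map_def)

lemma qn_dsum: assumes n: "n \<ge> 1" and m: "m \<ge> 1" and x: "x \<in> X.car n" and y: "y \<in> X.car m"
  shows "qn (n + m) (mat_dsum X n m x y) = max (qn n x) (qn m y)"
proof (rule antisym)
  let ?d = "mat_dsum X n m x y"
  have nm: "n + m \<ge> 1" using n by simp
  have d: "?d \<in> X.car (n + m)" using x y by simp
  have key1: "qn (n + m) ?d \<le> max (mnorm X n y1) (mnorm X m y2)"
    if y1: "y1 \<in> lifts n x" and y2: "y2 \<in> lifts m y" for y1 y2
  proof -
    have c: "y1 \<in> X.car n" "y2 \<in> X.car m" using y1 y2 by (auto simp: lifts_def)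
    have "cm (mat_dsum X n m y1 y2) = cm ?d"
      using cm_dsum[OF c] cm_dsum[OF x y] lifts_cmD[OF x y1] lifts_cmD[OF y y2] by metis
    then have "mat_dsum X n m y1 y2 \<in> lifts (n + m) ?d"
      by (intro lifts_cm) (use c x y in simp_all)
    then have "qn (n + m) ?d \<le> mnorm X (n + m) (mat_dsum X n m y1 y2)" by (rule qn_le[OF nm])
    then show ?thesis using X_dsum_norm[OF n m c] by simp
  qed
  show "qn (n + m) ?d \<le> max (qn n x) (qn m y)"
  proof (rule ccontr)
    assume "\<not> ?thesis"
    then have lt: "qn n x < qn (n + m) ?d" "qn m y < qn (n + m) ?d" by auto
    obtain y1 where y1: "y1 \<in> lifts n x" "mnorm X n y1 < qn (n + m) ?d"
    proof -
      have "\<not> (\<forall>y1\<in>lifts n x. qn (n + m) ?d \<le> mnorm X n y1)"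
        using qn_ge[OF x, of "qn (n + m) ?d"] lt(1) by force
      then show ?thesis using that by force
    qed
    obtain y2 where y2: "y2 \<in> lifts m y" "mnorm X m y2 < qn (n + m) ?d"
    proof -
      have "\<not> (\<forall>y2\<in>lifts m y. qn (n + m) ?d \<le> mnorm X m y2)"
        using qn_ge[OF y, of "qn (n + m) ?d"] lt(2) by force
      then show ?thesis using that by force
    qed
    show False using key1[OF y1(1) y2(1)] y1(2) y2(2) by simp
  qed
  show "max (qn n x) (qn m y) \<le> qn (n + m) ?d"
  proof (rule qn_ge[OF d])
    fix z assume z: "z \<in> lifts (n + m) ?d"
    then have zc: "z \<in> X.car (n + m)" and zP: "Phi (n + m) z = Phi (n + m) ?d" by (auto simp: lifts_def)
    have zent: "\<phi> (z i j) = \<phi> (?d i j)" if "i < n + m" "j < n + m" for i j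
      using fun_cong[OF fun_cong[OF zP, of i], of j] that by (simp add: mat_map_def)
    have c1: "compr (n + m) n 0 z \<in> lifts n x"
    proof -
      have "Phi n (compr (n + m) n 0 z) = Phi n x"
      proof (intro ext)
        fix k l show "Phi n (compr (n + m) n 0 z) k l = Phi n x k l"
        proof (cases "k < n \<and> l < n")
          case True
          then show ?thesis using comp_Phi[OF zc, of n 0 k l] zent[of k l]
            by (simp add: mat_map_def mat_dsum_def)
        next
          case False then show ?thesis by (auto simp: mat_map_def)
        qed
      qed
      then show ?thesis using zc by (simp add: lifts_def)
    qed
    have c2: "compr (n + m) m n z \<in> lifts m y"
    proof -
      have "Phi m (compr (n + m) m n z) = Phi m y"
      proof (intro ext)
        fix k l show "Phi m (compr (n + m) m n z) k l = Phi m y k l"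
        proof (cases "k < m \<and> l < m")
          case True
          then show ?thesis using comp_Phi[OF zc, of m n k l] zent[of "k + n" "l + n"]
            by (simp add: mat_map_def mat_dsum_def)
        next
          case False then show ?thesis by (auto simp: mat_map_def)
        qed
      qed
      then show ?thesis using zc by (simp add: lifts_def)
    qed
    have "qn n x \<le> mnorm X (n + m) z"
      using qn_le[OF n c1] comp_bound[OF nm n _ zc, of 0] by simp
    moreover have "qn m y \<le> mnorm X (n + m) z"
      using qn_le[OF m c2] comp_bound[OF nm m _ zc, of n] by simp
    ultimately show "max (qn n x) (qn m y) \<le> mnorm X (n + m) z" by simp
  qed
qed

end

context qsetup
begin

lemma Q_car_iff: "A \<in> vcar Q \<longleftrightarrow> (\<exists>a\<in>vcar X. A = coset X J a)"
  by (auto simp: Q_car)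
lemma Q_zero': "vzero Q = coset X J (vzero X)" by (simp add: Q_zero)

lemma ex_coset[simp]: "a \<in> vcar X \<Longrightarrow> \<exists>b\<in>vcar X. coset X J a = coset X J b" by blast

lemma cvs_Q: "cvector_space Q"
  unfolding cvector_space_def
  by (auto simp: Q_car_iff Q_add Q_scale Q_zero' X.add_ac X.scale_ladd X.scale_radd X.add_neg
      simp del: coset_zero)

lemma Q_mat_all: "(\<And>x. x \<in> X.car n \<Longrightarrow> P (cm x)) \<Longrightarrow> \<forall>S\<in>mat_carrier Q n. P S"
  using cm_rep by blast

lemma os_Q: "operator_space Q"
  unfolding operator_space_def
proof (intro conjI)
  show "cvector_space Q" by (rule cvs_Q)
  show "\<forall>n\<ge>1. \<forall>x\<in>mat_carrier Q n. 0 \<le> mnorm Q n x"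
    by (intro allI impI Q_mat_all) (simp add: Q_norm_cm qn_nonneg)
  show "\<forall>n\<ge>1. \<forall>x\<in>mat_carrier Q n. mnorm Q n x = 0 \<longrightarrow> x = mat_zero Q"
  proof (intro allI impI Q_mat_all impI)
    fix n x assume n: "n \<ge> 1" and x: "x \<in> X.car n" and h: "mnorm Q n (cm x) = 0"
    have "mnorm Y n (Phi n x) \<le> 0" using Phi_norm_le[OF n x] h Q_norm_cm[OF x] by simp
    then have "mnorm Y n (Phi n x) = 0" using Y_nonneg[OF n Phi_in[OF x]] by simp
    then have "Phi n x = mat_zero Y" by (rule Y_def0[OF n Phi_in[OF x]])
    then have "Phi n x = Phi n (mat_zero X)" by (simp add: Phi_zero)
    then show "cm x = mat_zero Q" using cm_eq[OF x X.mat_zero_in] by (simp add: Q_mat_zero)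
  qed
  show "\<forall>n\<ge>1. \<forall>c. \<forall>x\<in>mat_carrier Q n. mnorm Q n (mat_scale Q n c x) = cmod c * mnorm Q n x"
    by (intro allI impI Q_mat_all) (simp add: cm_scale Q_norm_cm qn_scale)
  show "\<forall>n\<ge>1. \<forall>x\<in>mat_carrier Q n. \<forall>y\<in>mat_carrier Q n. mnorm Q n (mat_add Q n x y) \<le> mnorm Q n x + mnorm Q n y"
    by (intro allI impI Q_mat_all) (simp add: cm_add Q_norm_cm qn_tri)
  show "\<forall>n\<ge>1. \<forall>m\<ge>1. \<forall>x\<in>mat_carrier Q n. \<forall>y\<in>mat_carrier Q m. mnorm Q (n + m) (mat_dsum Q n m x y) = max (mnorm Q n x) (mnorm Q m y)"
    by (intro allI impI Q_mat_all) (simp add: cm_dsum Q_norm_cm qn_dsum)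
  show "\<forall>n\<ge>1. \<forall>m\<ge>1. \<forall>x\<in>mat_carrier Q n. \<forall>\<alpha> \<beta>. mnorm Q m (mat_lr Q n m \<alpha> x \<beta>) \<le> cmat_norm m n \<alpha> * mnorm Q n x * cmat_norm n m \<beta>"
    by (intro allI impI Q_mat_all) (simp add: cm_lr Q_norm_cm qn_lr)
qed

lemma inv_Q: "involutive_os Q"
  unfolding involutive_os_def
proof (intro conjI)
  show "operator_space Q" by (rule os_Q)
  show "\<forall>a\<in>vcar Q. vstar Q a \<in> vcar Q" by (auto simp: Q_car_iff Q_star)
  show "\<forall>a\<in>vcar Q. vstar Q (vstar Q a) = a" by (auto simp: Q_car_iff Q_star)
  show "\<forall>a\<in>vcar Q. \<forall>b\<in>vcar Q. vstar Q (vadd Q a b) = vadd Q (vstar Q a) (vstar Q b)"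
    by (auto simp: Q_car_iff Q_star Q_add X_star_add)
  show "\<forall>c. \<forall>a\<in>vcar Q. vstar Q (vscale Q c a) = vscale Q (cnj c) (vstar Q a)"
    by (auto simp: Q_car_iff Q_star Q_scale X_star_scale)
  show "\<forall>n\<ge>1. \<forall>x\<in>mat_carrier Q n. mnorm Q n (mat_star Q n x) = mnorm Q n x"
    by (intro allI impI Q_mat_all) (simp add: cm_star Q_norm_cm qn_star)
qed


definition pc where "pc n x \<longleftrightarrow> x \<in> X.car n \<and> (\<forall>\<epsilon>>0. \<exists>p\<in>mpos X n. qn n (mat_sub X n x p) < \<epsilon>)"

lemma Q_pos_cm: assumes n: "n \<ge> 1" and x: "x \<in> X.car n" shows "cm x \<in> mpos Q n \<longleftrightarrow> pc n x"
proof -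
  have P: "{(\<lambda>i j. coset X J (p i j)) | p. p \<in> mpos X n} = cm ` mpos X n" by (auto simp: cm_def)
  have "cm x \<in> mpos Q n \<longleftrightarrow> (\<forall>\<epsilon>>0. \<exists>T\<in>cm ` mpos X n. mnorm Q n (mat_sub Q n (cm x) T) < \<epsilon>)"
    unfolding Q_mpos P mat_closure_def using x by simp
  also have "\<dots> \<longleftrightarrow> (\<forall>\<epsilon>>0. \<exists>p\<in>mpos X n. qn n (mat_sub X n x p) < \<epsilon>)"
  proof -
    have "mnorm Q n (mat_sub Q n (cm x) (cm p)) = qn n (mat_sub X n x p)" if "p \<in> mpos X n" for p
      using X_pos_car[OF n that] x by (simp add: cm_sub Q_norm_cm)
    then show ?thesis by auto
  qed
  finally show ?thesis using x by (simp add: pc_def)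
qed

lemma Q_pos_rep: "S \<in> mpos Q n \<Longrightarrow> \<exists>x\<in>X.car n. S = cm x"
  unfolding Q_mpos mat_closure_def using cm_rep by blast

lemma pc_Phi: assumes n: "n \<ge> 1" and pcx: "pc n x" shows "Phi n x \<in> mpos Y n"
proof -
  have x: "x \<in> X.car n" using pcx by (simp add: pc_def)
  have "Phi n x \<in> mat_closure Y n (mpos Y n)"
    unfolding mat_closure_def
  proof (intro CollectI conjI allI impI)
    show "Phi n x \<in> Y.car n" using x by simp
    fix \<epsilon> :: real assume e: "\<epsilon> > 0"
    then obtain p where p: "p \<in> mpos X n" "qn n (mat_sub X n x p) < \<epsilon>" using pcx by (auto simp: pc_def)
    have pc': "p \<in> X.car n" using X_pos_car[OF n p(1)] .
    have "mnorm Y n (mat_sub Y n (Phi n x) (Phi n p)) = mnorm Y n (Phi n (mat_sub X n x p))"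
      using x pc' by (simp add: Phi_sub)
    also have "\<dots> \<le> qn n (mat_sub X n x p)" by (rule Phi_norm_le[OF n]) (use x pc' in simp)
    finally show "\<exists>y\<in>mpos Y n. mnorm Y n (mat_sub Y n (Phi n x) y) < \<epsilon>"
      using p phi_pos[OF n p(1)] by force
  qed
  then show ?thesis using Y_pos_closed[OF n] by blast
qed

lemma mos_Q: "matrix_ordered_os Q"
  unfolding matrix_ordered_os_def
proof (intro conjI)
  show "involutive_os Q" by (rule inv_Q)
  show "\<forall>n\<ge>1. \<forall>S\<in>mpos Q n. S \<in> mat_carrier Q n \<and> mat_star Q n S = S"
  proof (intro allI impI ballI)
    fix n :: nat and S assume n: "n \<ge> 1" and S: "S \<in> mpos Q n"
    obtain x where x: "x \<in> X.car n" "S = cm x" using Q_pos_rep[OF S] by blast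
    have pcx: "pc n x" using Q_pos_cm[OF n x(1)] S x(2) by simp
    have "Phi n (mat_star X n x) = Phi n x"
      using Phi_star[OF x(1)] Y_pos_sa[OF n pc_Phi[OF n pcx]] by simp
    then have "cm (mat_star X n x) = cm x" using cm_eq[OF mat_star_in[OF x(1)] x(1)] by simp
    then show "S \<in> mat_carrier Q n \<and> mat_star Q n S = S" using x by (simp add: cm_star)
  qed
  show "\<forall>n\<ge>1. mat_closure Q n (mpos Q n) \<subseteq> mpos Q n"
  proof (intro allI impI subsetI)
    fix n :: nat and S assume n: "n \<ge> 1" and S: "S \<in> mat_closure Q n (mpos Q n)"
    then obtain x where x: "x \<in> X.car n" "S = cm x" using cm_rep unfolding mat_closure_def by blast
    have "pc n x" unfolding pc_def
    proof (intro conjI allI impI)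
      show "x \<in> X.car n" by fact
      fix \<epsilon> :: real assume e: "\<epsilon> > 0"
      obtain T where T: "T \<in> mpos Q n" "mnorm Q n (mat_sub Q n S T) < \<epsilon> / 2"
        using S e unfolding mat_closure_def by (auto dest: spec[of _ "\<epsilon> / 2"])
      obtain x' where x': "x' \<in> X.car n" "T = cm x'" using Q_pos_rep[OF T(1)] by blast
      have "pc n x'" using Q_pos_cm[OF n x'(1)] T(1) x'(2) by simp
      then obtain p where p: "p \<in> mpos X n" "qn n (mat_sub X n x' p) < \<epsilon> / 2"
        using e unfolding pc_def by (meson half_gt_zero)
      have pc': "p \<in> X.car n" using X_pos_car[OF n p(1)] .
      have d: "qn n (mat_sub X n x x') < \<epsilon> / 2" using T(2) x x' by (simp add: cm_sub Q_norm_cm)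
      have "qn n (mat_sub X n x p) = qn n (mat_add X n (mat_sub X n x x') (mat_sub X n x' p))"
        using X.I1[OF x(1) x'(1) pc'] by simp
      also have "\<dots> \<le> qn n (mat_sub X n x x') + qn n (mat_sub X n x' p)"
        by (rule qn_tri[OF n]) (use x x' pc' in simp_all)
      finally show "\<exists>p\<in>mpos X n. qn n (mat_sub X n x p) < \<epsilon>" using p d by force
    qed
    then show "S \<in> mpos Q n" using Q_pos_cm[OF n x(1)] x(2) by simp
  qed
  show "\<forall>n\<ge>1. \<forall>S\<in>mpos Q n. \<forall>T\<in>mpos Q n. mat_add Q n S T \<in> mpos Q n"
  proof (intro allI impI ballI)
    fix n :: nat and S T assume n: "n \<ge> 1" and S: "S \<in> mpos Q n" and T: "T \<in> mpos Q n"
    obtain x where x: "x \<in> X.car n" "S = cm x" using Q_pos_rep[OF S] by blast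
    obtain y where y: "y \<in> X.car n" "T = cm y" using Q_pos_rep[OF T] by blast
    have px: "pc n x" using Q_pos_cm[OF n x(1)] S x(2) by simp
    have py: "pc n y" using Q_pos_cm[OF n y(1)] T y(2) by simp
    have "pc n (mat_add X n x y)" unfolding pc_def
    proof (intro conjI allI impI)
      show "mat_add X n x y \<in> X.car n" using x y by simp
      fix \<epsilon> :: real assume e: "\<epsilon> > 0"
      obtain p where p: "p \<in> mpos X n" "qn n (mat_sub X n x p) < \<epsilon> / 2"
        using e px unfolding pc_def by (meson half_gt_zero)
      obtain q where q: "q \<in> mpos X n" "qn n (mat_sub X n y q) < \<epsilon> / 2"
        using e py unfolding pc_def by (meson half_gt_zero)
      have pc': "p \<in> X.car n" "q \<in> X.car n" using X_pos_car[OF n p(1)] X_pos_car[OF n q(1)] by auto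
      have "qn n (mat_sub X n (mat_add X n x y) (mat_add X n p q)) = qn n (mat_add X n (mat_sub X n x p) (mat_sub X n y q))"
        using X.I2[OF x(1) y(1) pc'] by simp
      also have "\<dots> \<le> qn n (mat_sub X n x p) + qn n (mat_sub X n y q)"
        by (rule qn_tri[OF n]) (use x y pc' in simp_all)
      finally show "\<exists>p\<in>mpos X n. qn n (mat_sub X n (mat_add X n x y) p) < \<epsilon>"
        using p q X_pos_add[OF n p(1) q(1)] by force
    qed
    then show "mat_add Q n S T \<in> mpos Q n" using Q_pos_cm[OF n] x y by (simp add: cm_add)
  qed
  show "\<forall>n\<ge>1. \<forall>t::real. t \<ge> 0 \<longrightarrow> (\<forall>S\<in>mpos Q n. mat_scale Q n (complex_of_real t) S \<in> mpos Q n)"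
  proof (intro allI impI ballI)
    fix n and t :: real and S assume n: "n \<ge> 1" and t: "t \<ge> 0" and S: "S \<in> mpos Q n"
    obtain x where x: "x \<in> X.car n" "S = cm x" using Q_pos_rep[OF S] by blast
    have px: "pc n x" using Q_pos_cm[OF n x(1)] S x(2) by simp
    have "pc n (mat_scale X n (complex_of_real t) x)" unfolding pc_def
    proof (intro conjI allI impI)
      show "mat_scale X n (complex_of_real t) x \<in> X.car n" using x by simp
      fix \<epsilon> :: real assume e: "\<epsilon> > 0"
      have e': "\<epsilon> / (t + 1) > 0" using e t by simp
      obtain p where p: "p \<in> mpos X n" "qn n (mat_sub X n x p) < \<epsilon> / (t + 1)"
        using e' px unfolding pc_def by blast
      have pc': "p \<in> X.car n" using X_pos_car[OF n p(1)] .
      have "qn n (mat_sub X n (mat_scale X n (complex_of_real t) x) (mat_scale X n (complex_of_real t) p))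
          = t * qn n (mat_sub X n x p)"
        using X.I3[OF x(1) pc'] qn_scale[OF n, of "mat_sub X n x p"] x pc' t by simp
      also have "\<dots> \<le> t * (\<epsilon> / (t + 1))" using p(2) t by (intro mult_left_mono) auto
      also have "\<dots> < \<epsilon>" using e t by (simp add: field_simps)
      finally show "\<exists>p\<in>mpos X n. qn n (mat_sub X n (mat_scale X n (complex_of_real t) x) p) < \<epsilon>"
        using X_pos_scale[OF n t p(1)] by force
    qed
    then show "mat_scale Q n (complex_of_real t) S \<in> mpos Q n" using Q_pos_cm[OF n] x by (simp add: cm_scale)
  qed
  show "\<forall>n\<ge>1. \<forall>m\<ge>1. \<forall>S\<in>mpos Q n. \<forall>\<alpha>. mat_conj Q n m \<alpha> S \<in> mpos Q m"
  proof (intro allI impI ballI)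
    fix n m :: nat and \<alpha> S assume n: "n \<ge> 1" and m: "m \<ge> 1" and S: "S \<in> mpos Q n"
    obtain x where x: "x \<in> X.car n" "S = cm x" using Q_pos_rep[OF S] by blast
    have px: "pc n x" using Q_pos_cm[OF n x(1)] S x(2) by simp
    define A where "A = cmat_norm m n (\<lambda>k i. cnj (\<alpha> i k))"
    define B where "B = cmat_norm n m \<alpha>"
    have "pc m (mat_conj X n m \<alpha> x)" unfolding pc_def
    proof (intro conjI allI impI)
      show "mat_conj X n m \<alpha> x \<in> X.car m" using x by simp
      fix \<epsilon> :: real assume e: "\<epsilon> > 0"
      have e': "\<epsilon> / (\<bar>A * B\<bar> + 1) > 0" using e by simp
      obtain p where p: "p \<in> mpos X n" "qn n (mat_sub X n x p) < \<epsilon> / (\<bar>A * B\<bar> + 1)"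
        using e' px unfolding pc_def by blast
      have pc': "p \<in> X.car n" using X_pos_car[OF n p(1)] .
      have q0: "0 \<le> qn n (mat_sub X n x p)" by (rule qn_nonneg[OF n]) (use x pc' in simp)
      have "qn m (mat_sub X m (mat_conj X n m \<alpha> x) (mat_conj X n m \<alpha> p)) = qn m (mat_conj X n m \<alpha> (mat_sub X n x p))"
        using X.conj_sub[OF x(1) pc'] by simp
      also have "\<dots> \<le> A * qn n (mat_sub X n x p) * B"
        unfolding mat_conj_def A_def B_def by (rule qn_lr[OF n m]) (use x pc' in simp)
      also have "\<dots> \<le> \<bar>A * B\<bar> * qn n (mat_sub X n x p)"
      proof -
        have "A * qn n (mat_sub X n x p) * B = (A * B) * qn n (mat_sub X n x p)" by (simp add: algebra_simps)
        also have "\<dots> \<le> \<bar>A * B\<bar> * qn n (mat_sub X n x p)" by (rule mult_right_mono[OF abs_ge_self q0])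
        finally show ?thesis .
      qed
      also have "\<dots> \<le> \<bar>A * B\<bar> * (\<epsilon> / (\<bar>A * B\<bar> + 1))" using p(2) by (intro mult_left_mono) auto
      also have "\<dots> < \<epsilon>" using e by (simp add: field_simps)
      finally show "\<exists>p\<in>mpos X m. qn m (mat_sub X m (mat_conj X n m \<alpha> x) p) < \<epsilon>"
        using X_pos_conj[OF n m p(1)] by force
    qed
    then show "mat_conj Q n m \<alpha> S \<in> mpos Q m" using Q_pos_cm[OF m] x by (simp add: cm_conj)
  qed
  show "\<forall>n\<ge>1. \<forall>m\<ge>1. \<forall>S\<in>mpos Q n. \<forall>T\<in>mpos Q m. mat_dsum Q n m S T \<in> mpos Q (n + m)"
  proof (intro allI impI ballI)
    fix n m :: nat and S T assume n: "n \<ge> 1" and m: "m \<ge> 1" and S: "S \<in> mpos Q n" and T: "T \<in> mpos Q m"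
    obtain x where x: "x \<in> X.car n" "S = cm x" using Q_pos_rep[OF S] by blast
    obtain y where y: "y \<in> X.car m" "T = cm y" using Q_pos_rep[OF T] by blast
    have px: "pc n x" using Q_pos_cm[OF n x(1)] S x(2) by simp
    have py: "pc m y" using Q_pos_cm[OF m y(1)] T y(2) by simp
    have nm: "n + m \<ge> 1" using n by simp
    have "pc (n + m) (mat_dsum X n m x y)" unfolding pc_def
    proof (intro conjI allI impI)
      show "mat_dsum X n m x y \<in> X.car (n + m)" using x y by simp
      fix \<epsilon> :: real assume e: "\<epsilon> > 0"
      obtain p where p: "p \<in> mpos X n" "qn n (mat_sub X n x p) < \<epsilon>"
        using e px unfolding pc_def by blast
      obtain q where q: "q \<in> mpos X m" "qn m (mat_sub X m y q) < \<epsilon>"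
        using e py unfolding pc_def by blast
      have pc': "p \<in> X.car n" "q \<in> X.car m" using X_pos_car[OF n p(1)] X_pos_car[OF m q(1)] by auto
      have "qn (n + m) (mat_sub X (n + m) (mat_dsum X n m x y) (mat_dsum X n m p q))
          = max (qn n (mat_sub X n x p)) (qn m (mat_sub X m y q))"
        using X.I5[OF x(1) pc'(1) y(1) pc'(2)] qn_dsum[OF n m] x y pc' by simp
      then show "\<exists>p\<in>mpos X (n + m). qn (n + m) (mat_sub X (n + m) (mat_dsum X n m x y) p) < \<epsilon>"
        using p q X_pos_dsum[OF n m p(1) q(1)] by force
    qed
    then show "mat_dsum Q n m S T \<in> mpos Q (n + m)" using Q_pos_cm[OF nm] x y by (simp add: cm_dsum)
  qed
  show "\<forall>n\<ge>1. \<forall>S\<in>mpos Q n. mat_scale Q n (-1) S \<in> mpos Q n \<longrightarrow> S = mat_zero Q"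
  proof (intro allI impI ballI)
    fix n :: nat and S assume n: "n \<ge> 1" and S: "S \<in> mpos Q n" and S': "mat_scale Q n (-1) S \<in> mpos Q n"
    obtain x where x: "x \<in> X.car n" "S = cm x" using Q_pos_rep[OF S] by blast
    have px: "pc n x" using Q_pos_cm[OF n x(1)] S x(2) by simp
    have px': "pc n (mat_scale X n (-1) x)" using Q_pos_cm[OF n] S' x by (simp add: cm_scale)
    have "Phi n x = mat_zero Y"
      using Y_pos_proper[OF n pc_Phi[OF n px]] pc_Phi[OF n px'] Phi_scale[OF x(1)] by simp
    then have "Phi n x = Phi n (mat_zero X)" by (simp add: Phi_zero)
    then show "S = mat_zero Q" using cm_eq[OF x(1) X.mat_zero_in] x(2) by (simp add: Q_mat_zero)
  qed
qed

end

theorem proposition3p4: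
  fixes X :: "'a mos" and Y :: "'b mos" and \<phi> :: "'a \<Rightarrow> 'b" and J :: "'a set"
  assumes "matrix_ordered_os X"
    and "matrix_ordered_os Y"
    and "ccp_map X Y \<phi>"
    and "J = kernel_of X Y \<phi>"
  shows "matrix_ordered_os (quot X J)"
proof -
  interpret qsetup X Y \<phi> J by unfold_locales (use assms in auto)
  show ?thesis by (rule mos_Q)
qed

end
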